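(* Let $k$ be a positive integer and, for each $n\ge 1$, let $w_{n,k}$ denote the number of words $w_1\cdots w_n$ with all $w_i\in[n]$ that contain no strictly decreasing subsequence of length $k+1$ (i.e. there are no indices $i_1<\dots<i_{k+1}$ with $w_{i_1}>w_{i_2}>\dots>w_{i_{k+1}}$). Then the limit $\lim_{n\to\infty} w_{n,k}^{1/n}$ exists and \[\limsup_{n\to\infty} w_{n,k}^{1/n} = \frac{(k+1)^{k+1}}{k^{k-1}}.\]
   Context: $[n]=\{1,2,\dots,n\}$. *)

theory Defs
  imports "HOL-Analysis.Analysis"
begin

definition has_decr_subseq :: "nat list \<Rightarrow> nat \<Rightarrow> bool" where
  "has_decr_subseq w m \<longleftrightarrow> (\<exists>idx :: nat \<Rightarrow> nat.
      (\<forall>j. Suc j < m \<longrightarrow> idx j < idx (Suc j)) \<and>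
      (\<forall>j < m. idx j < length w) \<and>
      (\<forall>j. Suc j < m \<longrightarrow> w ! (idx j) > w ! (idx (Suc j))))"

definition wcount :: "nat \<Rightarrow> nat \<Rightarrow> nat" where
  "wcount n k = card {w :: nat list. length w = n \<and> set w \<subseteq> {1..n} \<and>
                       \<not> has_decr_subseq w (k + 1)}"

end

theory Submission
  imports Defs "HOL-Combinatorics.Multiset_Permutations" "HOL-Real_Asymp.Real_Asymp"
begin


lemma chain_rel:
  assumes "\<forall>j. Suc j < m \<longrightarrow> R (g j) (g (Suc j))" "transp R" "i < j" "j < m"
  shows "R (g i) (g j)"
  using assms(3,4)
proof (induction j)
  case 0 then show ?case by simp
next
  case (Suc j)
  show ?case
  proof (cases "i = j")
    case True then show ?thesis using assms(1) Suc by auto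
  next
    case False
    then have "R (g i) (g j)" using Suc by auto
    moreover have "R (g j) (g (Suc j))" using assms(1) Suc by auto
    ultimately show ?thesis using assms(2) by (meson transpD)
  qed
qed

definition classfun :: "nat list \<Rightarrow> nat \<Rightarrow> (nat \<Rightarrow> nat) \<Rightarrow> bool" where
  "classfun w k c \<longleftrightarrow> (\<forall>p<length w. c p < k) \<and>
     (\<forall>p q. p < q \<and> q < length w \<and> c p = c q \<longrightarrow> w ! p \<le> w ! q)"

lemma classfun_avoid:
  assumes "classfun w k c"
  shows "\<not> has_decr_subseq w (k + 1)"
proof
  assume "has_decr_subseq w (k + 1)"
  then obtain idx where i1: "\<forall>j. Suc j < k + 1 \<longrightarrow> idx j < idx (Suc j)"
    and i2: "\<forall>j < k + 1. idx j < length w"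
    and i3: "\<forall>j. Suc j < k + 1 \<longrightarrow> w ! (idx j) > w ! (idx (Suc j))"
    unfolding has_decr_subseq_def by blast
  have "(\<lambda>j. c (idx j)) ` {..<k+1} \<subseteq> {..<k}"
    using assms i2 unfolding classfun_def by auto
  then have "card ((\<lambda>j. c (idx j)) ` {..<k+1}) < card {..<k+1}"
    by (metis card_lessThan card_mono finite_lessThan le_imp_less_Suc Suc_eq_plus1)
  then have "\<not> inj_on (\<lambda>j. c (idx j)) {..<k+1}" by (rule pigeonhole)
  then obtain a b where ab: "a < k+1" "b < k+1" "a \<noteq> b" "c (idx a) = c (idx b)"
    unfolding inj_on_def by auto
  have key: False if "a < b" "b < k+1" "c (idx a) = c (idx b)" for a b
  proof -
    have "idx a < idx b" using chain_rel[of "k+1" "(<)" idx a b] i1 that by (auto simp: transp_def)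
    moreover have "w ! (idx a) > w ! (idx b)"
      using chain_rel[of "k+1" "(>)" "\<lambda>j. w ! idx j" a b] i3 that by (auto simp: transp_def)
    ultimately show False using assms that i2 unfolding classfun_def
      by (metis not_le)
  qed
  show False
  proof (cases "a < b")
    case True then show ?thesis using key ab by blast
  next
    case False then have "b < a" using ab by auto
    then show ?thesis using key ab by metis
  qed
qed


definition chainset :: "nat list \<Rightarrow> nat \<Rightarrow> nat set" where
  "chainset w p = {m. \<exists>idx. 1 \<le> m \<and> (\<forall>j. Suc j < m \<longrightarrow> idx j < idx (Suc j) \<and> w ! idx (Suc j) < w ! idx j)
     \<and> (\<forall>j<m. idx j < length w) \<and> idx (m - 1) = p}"

definition lab :: "nat list \<Rightarrow> nat \<Rightarrow> nat" where
  "lab w p = Max (chainset w p)"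

lemma chainset_bound:
  assumes "\<not> has_decr_subseq w (k + 1)" "m \<in> chainset w p"
  shows "m \<le> k"
proof (rule ccontr)
  assume "\<not> m \<le> k"
  from assms(2) obtain idx where "(\<forall>j. Suc j < m \<longrightarrow> idx j < idx (Suc j) \<and> w ! idx (Suc j) < w ! idx j)"
     "(\<forall>j<m. idx j < length w)" unfolding chainset_def by blast
  then have "has_decr_subseq w (k+1)" unfolding has_decr_subseq_def using \<open>\<not> m \<le> k\<close>
    by (intro exI[of _ idx]) auto
  then show False using assms(1) by simp
qed

lemma one_in_chainset: "p < length w \<Longrightarrow> 1 \<in> chainset w p"
  unfolding chainset_def by (intro CollectI exI[of _ "\<lambda>_. p"]) auto

lemma lab_props:
  assumes "\<not> has_decr_subseq w (k + 1)" "p < length w"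
  shows "1 \<le> lab w p" "lab w p \<le> k" "lab w p \<in> chainset w p"
proof -
  have fin: "finite (chainset w p)" using chainset_bound[OF assms(1)]
    by (meson finite_atMost finite_subset subsetI atMost_iff)
  have ne: "chainset w p \<noteq> {}" using one_in_chainset[OF assms(2)] by auto
  show "lab w p \<in> chainset w p" unfolding lab_def using Max_in[OF fin ne] .
  then show "lab w p \<le> k" using chainset_bound[OF assms(1)] by auto
  show "1 \<le> lab w p" unfolding lab_def using Max_ge[OF fin one_in_chainset[OF assms(2)]] .
qed

lemma lab_step:
  assumes "\<not> has_decr_subseq w (k + 1)" "p < q" "q < length w" "w ! q < w ! p"
  shows "lab w p < lab w q"
proof -
  have pl: "p < length w" using assms by auto
  let ?m = "lab w p"
  obtain idx where i: "1 \<le> ?m" "(\<forall>j. Suc j < ?m \<longrightarrow> idx j < idx (Suc j) \<and> w ! idx (Suc j) < w ! idx j)"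
     "(\<forall>j<?m. idx j < length w)" "idx (?m - 1) = p"
    using lab_props(3)[OF assms(1) pl] unfolding chainset_def by blast
  define idx' where "idx' = idx(?m := q)"
  have "Suc ?m \<in> chainset w q"
    unfolding chainset_def
  proof (intro CollectI exI[of _ idx'] conjI allI impI)
    fix j assume j: "Suc j < Suc ?m"
    show "idx' j < idx' (Suc j)"
    proof (cases "Suc j = ?m")
      case True then have "j = ?m - 1" by simp
      then show ?thesis using i assms True unfolding idx'_def by simp
    next
      case False then show ?thesis using i j unfolding idx'_def by auto
    qed
    show "w ! idx' (Suc j) < w ! idx' j"
    proof (cases "Suc j = ?m")
      case True then have "j = ?m - 1" by simp
      then show ?thesis using i assms True unfolding idx'_def by simp
    next
      case False then show ?thesis using i j unfolding idx'_def by auto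
    qed
  next
    fix j assume "j < Suc ?m" then show "idx' j < length w" using i assms unfolding idx'_def by auto
  qed (auto simp: idx'_def)
  moreover have "finite (chainset w q)" using chainset_bound[OF assms(1)]
    by (meson finite_atMost finite_subset subsetI atMost_iff)
  ultimately have "Suc ?m \<le> lab w q" unfolding lab_def[of w q] by (simp add: Max_ge)
  then show ?thesis by simp
qed

lemma mirsky:
  assumes "\<not> has_decr_subseq w (k + 1)"
  shows "classfun w k (\<lambda>p. lab w p - 1)"
  unfolding classfun_def
proof (intro conjI allI impI)
  fix p assume "p < length w"
  then show "lab w p - 1 < k" using lab_props[OF assms] by (metis Suc_le_eq diff_less le_trans less_one not_le zero_less_diff)
next
  fix p q assume h: "p < q \<and> q < length w \<and> lab w p - 1 = lab w q - 1"
  then have "lab w p = lab w q" using lab_props[OF assms, of p] lab_props[OF assms, of q] by auto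
  then show "w ! p \<le> w ! q" using lab_step[OF assms, of p q] h by (metis not_le less_irrefl)
qed


definition Wset :: "nat \<Rightarrow> nat \<Rightarrow> nat list set" where
  "Wset n k = {w. length w = n \<and> set w \<subseteq> {1..n} \<and> \<not> has_decr_subseq w (k + 1)}"

lemma wcount_Wset: "wcount n k = card (Wset n k)"
  unfolding wcount_def Wset_def by simp

lemma finite_Wset: "finite (Wset n k)"
proof -
  have "Wset n k \<subseteq> {xs. set xs \<subseteq> {1..n} \<and> length xs = n}" unfolding Wset_def by auto
  then show ?thesis by (rule finite_subset) (simp add: finite_lists_length_eq)
qed

lemma La: "sorted xs \<Longrightarrow> sorted_wrt (<) (map (\<lambda>i. xs!i + i) [0..<length xs])"
  by (auto simp: sorted_wrt_iff_nth_less sorted_iff_nth_mono intro: add_le_less_mono)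

lemma Lb: "length xs = length ys \<Longrightarrow> map (\<lambda>i. xs!i + i) [0..<length xs] = map (\<lambda>i. ys!i + i) [0..<length ys]
   \<Longrightarrow> xs = ys"
proof (intro nth_equalityI)
  fix i assume "length xs = length ys" "map (\<lambda>i. xs!i + i) [0..<length xs] = map (\<lambda>i. ys!i + i) [0..<length ys]"
    "i < length xs"
  then have "(map (\<lambda>i. xs!i + i) [0..<length xs]) ! i = (map (\<lambda>i. ys!i + i) [0..<length ys]) ! i" by simp
  then show "xs ! i = ys ! i" using \<open>i < length xs\<close> \<open>length xs = length ys\<close> by simp
qed

lemma Lc: "sorted xs \<Longrightarrow> sorted ys \<Longrightarrow> mset xs = mset ys \<Longrightarrow> xs = ys"
  by (metis properties_for_sort sorted_sort_id)

lemma Ld: "(\<forall>p q. p < q \<and> q < length xs \<and> P (xs!p) \<and> P (xs!q) \<longrightarrow> R (xs!p) (xs!q))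
   \<Longrightarrow> sorted_wrt R (filter P xs)"
proof (induction xs)
  case Nil then show ?case by simp
next
  case (Cons x xs)
  have ih: "sorted_wrt R (filter P xs)"
    using Cons.prems by (intro Cons.IH allI impI) (metis Suc_mono length_Cons nth_Cons_Suc)
  have "\<forall>y\<in>set (filter P xs). P x \<longrightarrow> R x y"
  proof (intro ballI impI)
    fix y assume "y \<in> set (filter P xs)" "P x"
    then obtain q where "q < length xs" "xs ! q = y" "P y" by (auto simp: in_set_conv_nth)
    then show "R x y" using Cons.prems \<open>P x\<close> by (metis Suc_mono length_Cons nth_Cons_0 nth_Cons_Suc zero_less_Suc)
  qed
  then show ?case using ih by auto
qed

lemma Le: "length xs = length ys \<Longrightarrow> map fst xs = map fst ys \<Longrightarrow>
   (\<forall>j. filter (\<lambda>z. fst z = j) xs = filter (\<lambda>z. fst z = j) ys) \<Longrightarrow> xs = ys"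
proof (induction xs ys rule: list_induct2)
  case Nil then show ?case by simp
next
  case (Cons x xs y ys)
  then have fx: "fst x = fst y" by simp
  have "filter (\<lambda>z. fst z = fst x) (x # xs) = filter (\<lambda>z. fst z = fst x) (y # ys)" using Cons.prems by blast
  then have xy: "x = y" and h1: "filter (\<lambda>z. fst z = fst x) xs = filter (\<lambda>z. fst z = fst x) ys" using fx by auto
  have "\<forall>j. filter (\<lambda>z. fst z = j) xs = filter (\<lambda>z. fst z = j) ys"
  proof
    fix j show "filter (\<lambda>z. fst z = j) xs = filter (\<lambda>z. fst z = j) ys"
    proof (cases "j = fst x")
      case True then show ?thesis using h1 by simp
    next
      case False
      have "filter (\<lambda>z. fst z = j) (x # xs) = filter (\<lambda>z. fst z = j) (y # ys)" using Cons.prems by blast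
      then show ?thesis using False fx by auto
    qed
  qed
  then show ?case using Cons xy by auto
qed


definition labl :: "nat \<Rightarrow> nat list \<Rightarrow> nat list" where
  "labl n w = map (\<lambda>p. lab w p - 1) [0..<n]"

definition zsl :: "nat \<Rightarrow> nat list \<Rightarrow> (nat \<times> nat) list" where
  "zsl n w = zip (labl n w) (map (\<lambda>x. x - 1) w)"

definition codes :: "nat \<Rightarrow> nat list \<Rightarrow> nat list" where
  "codes n w = map (\<lambda>z. fst z * n + snd z) (zsl n w)"

definition upmap :: "nat \<Rightarrow> nat list \<Rightarrow> nat list \<times> nat set" where
  "upmap n w = (labl n w, set (map (\<lambda>i. sort (codes n w) ! i + i) [0..<n]))"

lemma zsl_nth: "w \<in> Wset n k \<Longrightarrow> p < n \<Longrightarrow> zsl n w ! p = (lab w p - 1, w ! p - 1)"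
  unfolding zsl_def labl_def Wset_def by auto

lemma len_zsl: "w \<in> Wset n k \<Longrightarrow> length (zsl n w) = n"
  unfolding zsl_def labl_def Wset_def by auto

lemma zsl_range: "w \<in> Wset n k \<Longrightarrow> z \<in> set (zsl n w) \<Longrightarrow> fst z < k \<and> snd z < n"
proof -
  assume w: "w \<in> Wset n k" and z: "z \<in> set (zsl n w)"
  then obtain p where p: "p < n" "z = zsl n w ! p" using len_zsl by (metis in_set_conv_nth)
  have cf: "classfun w k (\<lambda>p. lab w p - 1)" using w mirsky unfolding Wset_def by auto
  have "w ! p \<in> set w" using w p unfolding Wset_def by simp
  then have "w ! p \<in> {1..n}" using w unfolding Wset_def by blast
  then show ?thesis using cf p w zsl_nth[OF w p(1)] unfolding classfun_def Wset_def by auto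
qed

lemma zsl_sorted: "w \<in> Wset n k \<Longrightarrow> sorted (map snd (filter (\<lambda>z. fst z = j) (zsl n w)))"
proof -
  assume w: "w \<in> Wset n k"
  have cf: "classfun w k (\<lambda>p. lab w p - 1)" using w mirsky unfolding Wset_def by auto
  have "sorted_wrt (\<lambda>a b. snd a \<le> snd b) (filter (\<lambda>z. fst z = j) (zsl n w))"
  proof (rule Ld, intro allI impI)
    fix p q assume h: "p < q \<and> q < length (zsl n w) \<and> fst (zsl n w ! p) = j \<and> fst (zsl n w ! q) = j"
    then have "q < n" using len_zsl[OF w] by simp
    then have pq: "p < n" using h by simp
    have "lab w p - 1 = lab w q - 1" using h zsl_nth[OF w pq] zsl_nth[OF w \<open>q < n\<close>] by simp
    then have "w ! p \<le> w ! q" using cf h \<open>q < n\<close> w unfolding classfun_def Wset_def by auto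
    then show "snd (zsl n w ! p) \<le> snd (zsl n w ! q)"
      using zsl_nth[OF w pq] zsl_nth[OF w \<open>q < n\<close>] by (simp add: diff_le_mono)
  qed
  then show ?thesis by (simp add: sorted_map)
qed

lemma fst_filter: "map fst (filter (\<lambda>z. fst z = j) xs) = replicate (length (filter (\<lambda>z. fst z = j) xs)) j"
  by (induction xs) auto

lemma up_inj_core:
  assumes w: "w \<in> Wset n k" and w': "w' \<in> Wset n k"
    and l: "labl n w = labl n w'" and s: "sort (codes n w) = sort (codes n w')"
  shows "w = w'"
proof -
  define dec where "dec = (\<lambda>y::nat. (y div n, y mod n))"
  have dz: "mset (zsl n v) = image_mset dec (mset (codes n v))" if v: "v \<in> Wset n k" for v
  proof -
    have "image_mset dec (mset (codes n v)) = image_mset (dec \<circ> (\<lambda>z. fst z * n + snd z)) (mset (zsl n v))"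
      unfolding codes_def by (simp add: multiset.map_comp)
    also have "\<dots> = image_mset id (mset (zsl n v))"
    proof (rule image_mset_cong)
      fix z assume "z \<in># mset (zsl n v)"
      then have "snd z < n" using zsl_range[OF v] by auto
      then show "(dec \<circ> (\<lambda>z. fst z * n + snd z)) z = id z" unfolding dec_def by (cases z) auto
    qed
    finally show ?thesis by simp
  qed
  have "mset (codes n w) = mset (codes n w')" using s by (metis mset_sort)
  then have mz: "mset (zsl n w) = mset (zsl n w')" using dz[OF w] dz[OF w'] by simp
  have fj: "filter (\<lambda>z. fst z = j) (zsl n w) = filter (\<lambda>z. fst z = j) (zsl n w')" for j
  proof -
    let ?a = "filter (\<lambda>z. fst z = j) (zsl n w)" and ?b = "filter (\<lambda>z. fst z = j) (zsl n w')"
    have ma: "mset ?a = mset ?b" using mz by (metis mset_filter)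
    then have "mset (map snd ?a) = mset (map snd ?b)" by simp
    then have sn: "map snd ?a = map snd ?b" using Lc zsl_sorted[OF w] zsl_sorted[OF w'] by blast
    have len: "length ?a = length ?b" using ma by (metis size_mset)
    have "map fst ?a = replicate (length ?a) j" by (rule fst_filter)
    moreover have "map fst ?b = replicate (length ?b) j" by (rule fst_filter)
    ultimately have "map fst ?a = map fst ?b" using len by simp
    then show ?thesis using sn by (rule pair_list_eqI)
  qed
  have "map fst (zsl n w) = map fst (zsl n w')"
    using l w w' unfolding zsl_def Wset_def labl_def by simp
  then have "zsl n w = zsl n w'" using Le len_zsl[OF w] len_zsl[OF w'] fj by metis
  then have "map snd (zsl n w) = map snd (zsl n w')" by simp
  then have "map (\<lambda>x. x - 1) w = map (\<lambda>x. x - 1) w'"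
    using w w' unfolding zsl_def labl_def Wset_def by simp
  moreover have "\<forall>x\<in>set w. x \<ge> 1" "\<forall>x\<in>set w'. x \<ge> 1" using w w' unfolding Wset_def by auto
  ultimately show "w = w'"
  proof (intro nth_equalityI)
    show "length w = length w'" using w w' unfolding Wset_def by simp
    fix i assume i: "i < length w"
    assume m: "map (\<lambda>x. x - 1) w = map (\<lambda>x. x - 1) w'" and b: "\<forall>x\<in>set w. x \<ge> 1" "\<forall>x\<in>set w'. x \<ge> 1"
    have i': "i < length w'" using i w w' unfolding Wset_def by simp
    have "w ! i - 1 = w' ! i - 1" using m i i' by (metis nth_map)
    moreover have "w ! i \<ge> 1" "w' ! i \<ge> 1" using b i i' by auto
    ultimately show "w ! i = w' ! i" by simp
  qed
qed


lemma binom_upper: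
  assumes "b \<le> N"
  shows "real (N choose b) * real b ^ b * real (N - b) ^ (N - b) \<le> real N ^ N"
proof -
  have "real N ^ N = (real b + real (N - b)) ^ N" using assms by simp
  also have "\<dots> = (\<Sum>i\<le>N. real (N choose i) * real b ^ i * real (N - b) ^ (N - i))"
    by (simp add: binomial_ring)
  also have "\<dots> \<ge> real (N choose b) * real b ^ b * real (N - b) ^ (N - b)"
    by (rule member_le_sum[where f = "\<lambda>i. real (N choose i) * real b ^ i * real (N - b) ^ (N - i)"])
       (use assms in auto)
  finally show ?thesis .
qed

lemma binom_mono1: "a \<le> a' \<Longrightarrow> a choose b \<le> a' choose b"
proof -
  assume "a \<le> a'"
  moreover have "\<And>n. n choose b \<le> Suc n choose b" by (case_tac b) auto
  ultimately show ?thesis using lift_Suc_mono_le[of "\<lambda>n. n choose b" a a'] by blast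
qed

lemma upmap_inj: "inj_on (upmap n) (Wset n k)"
proof (rule inj_onI)
  fix w w' assume w: "w \<in> Wset n k" and w': "w' \<in> Wset n k" and e: "upmap n w = upmap n w'"
  have l: "labl n w = labl n w'" using e unfolding upmap_def by simp
  have lc: "length (codes n v) = n" if "v \<in> Wset n k" for v using len_zsl[OF that] unfolding codes_def by simp
  let ?g = "\<lambda>v. map (\<lambda>i. sort (codes n v) ! i + i) [0..<n]"
  have sw: "sorted_wrt (<) (?g v)" if "v \<in> Wset n k" for v
    using La[of "sort (codes n v)"] lc[OF that] by simp
  have "set (?g w) = set (?g w')" using e unfolding upmap_def by simp
  then have "?g w = ?g w'" using sw[OF w] sw[OF w']
    by (metis sorted_distinct_set_unique strict_sorted_iff)
  then have "sort (codes n w) = sort (codes n w')" using Lb[of "sort (codes n w)" "sort (codes n w')"]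
    lc[OF w] lc[OF w'] by simp
  then show "w = w'" using up_inj_core[OF w w' l] by simp
qed

lemma upmap_range:
  assumes w: "w \<in> Wset n k"
  shows "upmap n w \<in> {l. set l \<subseteq> {..<k} \<and> length l = n} \<times> {A. A \<subseteq> {..<k*n+n-1} \<and> card A = n}"
proof -
  have cf: "classfun w k (\<lambda>p. lab w p - 1)" using w mirsky unfolding Wset_def by auto
  have l1: "set (labl n w) \<subseteq> {..<k}" using cf w unfolding labl_def classfun_def Wset_def by auto
  have l2: "length (labl n w) = n" unfolding labl_def by simp
  let ?s = "sort (codes n w)"
  have lc: "length ?s = n" using len_zsl[OF w] unfolding codes_def by simp
  have cb: "x < k * n" if "x \<in> set ?s" for x
  proof -
    from that have "x \<in> set (codes n w)" by simp
    then obtain z where z: "z \<in> set (zsl n w)" "x = fst z * n + snd z" unfolding codes_def by auto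
    then have "fst z < k" "snd z < n" using zsl_range[OF w] by auto
    then have "fst z * n + snd z < (fst z + 1) * n" by simp
    also have "\<dots> \<le> k * n" using \<open>fst z < k\<close> by (intro mult_right_mono) auto
    finally show ?thesis using z by simp
  qed
  let ?g = "map (\<lambda>i. ?s ! i + i) [0..<n]"
  have sw: "sorted_wrt (<) ?g" using La[of ?s] lc by simp
  then have "distinct ?g" by (simp add: strict_sorted_iff)
  then have c: "card (set ?g) = n" using distinct_card[OF \<open>distinct ?g\<close>] by simp
  have "set ?g \<subseteq> {..<k*n+n-1}"
  proof
    fix y assume "y \<in> set ?g"
    then obtain i where i: "i < n" "y = ?s ! i + i" by auto
    have "?s ! i < k * n" using cb i lc by (metis nth_mem)
    then show "y \<in> {..<k*n+n-1}" using i by auto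
  qed
  then show ?thesis using l1 l2 c unfolding upmap_def by auto
qed

lemma upper_card:
  assumes "k \<ge> 1"
  shows "wcount n k \<le> k ^ n * ((k*n + n - 1) choose n)"
proof -
  have "card (Wset n k) \<le> card ({l. set l \<subseteq> {..<k} \<and> length l = n} \<times> {A. A \<subseteq> {..<k*n+n-1} \<and> card A = n})"
  proof (rule card_inj_on_le[OF upmap_inj])
    show "upmap n ` Wset n k \<subseteq> {l. set l \<subseteq> {..<k} \<and> length l = n} \<times> {A. A \<subseteq> {..<k*n+n-1} \<and> card A = n}"
      using upmap_range by blast
    show "finite ({l. set l \<subseteq> {..<k} \<and> length l = n} \<times> {A. A \<subseteq> {..<k*n+n-1} \<and> card A = n})"
      by (intro finite_cartesian_product) (auto simp: finite_lists_length_eq)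
  qed
  also have "\<dots> = k ^ n * ((k*n + n - 1) choose n)"
    by (simp add: card_cartesian_product card_lists_length_eq n_subsets)
  finally show ?thesis by (simp add: wcount_Wset)
qed

definition LL :: "nat \<Rightarrow> real" where
  "LL k = real (k + 1) ^ (k + 1) / real k ^ (k - 1)"

lemma upper_real:
  assumes "k \<ge> 1"
  shows "real (wcount n k) \<le> LL k ^ n"
proof -
  have "(k*n + n - 1) choose n \<le> ((k+1)*n) choose n"
    by (rule binom_mono1) simp
  then have "real (wcount n k) \<le> real k ^ n * real (((k+1)*n) choose n)"
    using upper_card[OF assms, of n]
    by (metis (mono_tags, lifting) of_nat_le_iff of_nat_mult of_nat_power mult_le_mono2 order_trans)
  also have "real (((k+1)*n) choose n) \<le> real (k+1) ^ ((k+1)*n) / real k ^ (k*n)"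
  proof -
    have "(k+1)*n - n = k*n" by simp
    then have "real (((k+1)*n) choose n) * real n ^ n * real (k*n) ^ (k*n) \<le> real ((k+1)*n) ^ ((k+1)*n)"
      using binom_upper[of n "(k+1)*n"] by simp
    moreover have e1: "real ((k+1)*n) ^ ((k+1)*n) = real (k+1) ^ ((k+1)*n) * real n ^ ((k+1)*n)"
      by (simp only: of_nat_mult power_mult_distrib)
    moreover have e2: "real (k*n) ^ (k*n) = real k ^ (k*n) * real n ^ (k*n)"
      by (simp only: of_nat_mult power_mult_distrib)
    moreover have e3: "real n ^ n * real n ^ (k*n) = real n ^ ((k+1)*n)"
      by (simp add: power_add[symmetric] algebra_simps)
    ultimately have key: "real (((k+1)*n) choose n) * (real k ^ (k*n) * real n ^ ((k+1)*n)) \<le> real (k+1) ^ ((k+1)*n) * real n ^ ((k+1)*n)"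
      by (metis (no_types, lifting) mult.assoc mult.left_commute)
    then show ?thesis
    proof (cases "n = 0")
      case True then show ?thesis by simp
    next
      case False
      then have "real n ^ ((k+1)*n) > 0" by simp
      then have "real (((k+1)*n) choose n) * real k ^ (k*n) \<le> real (k+1) ^ ((k+1)*n)"
        using key by (metis mult.assoc mult_le_cancel_right_pos)
      then show ?thesis using assms by (simp add: field_simps)
    qed
  qed
  then have "real k ^ n * real (((k+1)*n) choose n) \<le> real k ^ n * (real (k+1) ^ ((k+1)*n) / real k ^ (k*n))"
    by (intro mult_left_mono) auto
  also have "\<dots> = LL k ^ n"
  proof -
    have "real k ^ (k*n) = real k ^ n * real k ^ ((k-1)*n)" using assms
      by (metis add.commute le_add_diff_inverse2 mult_Suc mult.commute power_add Suc_eq_plus1 mult.left_commute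
          add_diff_cancel_right')
    moreover have e4: "real (k+1) ^ ((k+1)*n) = (real (k+1) ^ (k+1)) ^ n" by (simp only: power_mult)
    moreover have e5: "real k ^ ((k-1)*n) = (real k ^ (k-1)) ^ n" by (simp only: power_mult)
    moreover have "real k ^ n > 0" using assms by simp
    ultimately show ?thesis unfolding LL_def power_divide by (simp add: field_simps)
  qed
  finally show ?thesis .
qed


lemma concat_in:
  assumes u: "u \<in> Wset a k" and v: "v \<in> Wset b k"
  shows "u @ map (\<lambda>x. x + a) v \<in> Wset (a + b) k"
proof -
  let ?w = "u @ map (\<lambda>x. x + a) v"
  have cu: "classfun u k (\<lambda>p. lab u p - 1)" using u mirsky unfolding Wset_def by auto
  have cv: "classfun v k (\<lambda>p. lab v p - 1)" using v mirsky unfolding Wset_def by auto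
  have lu: "length u = a" and lv: "length v = b" using u v unfolding Wset_def by auto
  have su: "set u \<subseteq> {1..a}" and sv: "set v \<subseteq> {1..b}" using u v unfolding Wset_def by auto
  define c where "c = (\<lambda>p. if p < a then lab u p - 1 else lab v (p - a) - 1)"
  have nth_lo: "?w ! p = u ! p" if "p < a" for p using that lu by (simp add: nth_append)
  have nth_hi: "?w ! p = v ! (p - a) + a" if "p \<ge> a" "p < a + b" for p using that lu lv by (simp add: nth_append)
  have "classfun ?w k c"
    unfolding classfun_def
  proof (intro conjI allI impI)
    fix p assume "p < length ?w"
    then show "c p < k" using cu cv lu lv unfolding classfun_def c_def by auto
  next
    fix p q assume h: "p < q \<and> q < length ?w \<and> c p = c q"
    show "?w ! p \<le> ?w ! q"
    proof (cases "q < a")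
      case True
      then show ?thesis using h cu nth_lo[of p] nth_lo[of q] lu unfolding classfun_def c_def by auto
    next
      case qa: False
      show ?thesis
      proof (cases "p < a")
        case True
        have "u ! p \<in> set u" using True lu by simp
        then have "u ! p \<le> a" using su by auto
        moreover have "v ! (q - a) \<ge> 0" by simp
        ultimately show ?thesis using nth_lo[OF True] nth_hi[of q] qa h lu lv by simp
      next
        case False
        then have "p - a < q - a" "q - a < length v" "lab v (p - a) - 1 = lab v (q - a) - 1"
          using h qa lu lv unfolding c_def by auto
        then have "v ! (p - a) \<le> v ! (q - a)" using cv unfolding classfun_def by blast
        then show ?thesis using nth_hi[of p] nth_hi[of q] False qa h lu lv by simp
      qed
    qed
  qed
  then have "\<not> has_decr_subseq ?w (k + 1)" by (rule classfun_avoid)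
  moreover have "set ?w \<subseteq> {1..a+b}" using su sv by auto
  ultimately show ?thesis using lu lv unfolding Wset_def by simp
qed

lemma supermult: "wcount a k * wcount b k \<le> wcount (a + b) k"
proof -
  have "card (Wset a k \<times> Wset b k) \<le> card (Wset (a + b) k)"
  proof (rule card_inj_on_le)
    show "inj_on (\<lambda>(u, v). u @ map (\<lambda>x. x + a) v) (Wset a k \<times> Wset b k)"
    proof (rule inj_onI, clarify)
      fix u v u' v' assume "u \<in> Wset a k" "v \<in> Wset b k" "u' \<in> Wset a k" "v' \<in> Wset b k"
        and e: "u @ map (\<lambda>x. x + a) v = u' @ map (\<lambda>x. x + a) v'"
      then have "length u = length u'" unfolding Wset_def by simp
      then have "u = u'" "map (\<lambda>x. x + a) v = map (\<lambda>x. x + a) v'" using e by auto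
      moreover have "inj (\<lambda>x::nat. x + a)" by (simp add: inj_def)
      ultimately show "u = u' \<and> v = v'" by (simp add: inj_map_eq_map)
    qed
    show "(\<lambda>(u, v). u @ map (\<lambda>x. x + a) v) ` (Wset a k \<times> Wset b k) \<subseteq> Wset (a + b) k"
      using concat_in by auto
    show "finite (Wset (a + b) k)" by (rule finite_Wset)
  qed
  then show ?thesis by (simp add: wcount_Wset card_cartesian_product)
qed

lemma wcount_pos:
  assumes "k \<ge> 1"
  shows "wcount n k \<ge> 1"
proof -
  have "classfun (replicate n 1) k (\<lambda>_. 0)" using assms unfolding classfun_def by auto
  then have "replicate n 1 \<in> Wset n k" using classfun_avoid unfolding Wset_def by auto
  then have "Wset n k \<noteq> {}" by auto
  then show ?thesis using finite_Wset unfolding wcount_Wset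
    by (simp add: Suc_leI card_gt_0_iff)
qed

lemma wcount_mono:
  assumes "k \<ge> 1" "a \<le> b"
  shows "wcount a k \<le> wcount b k"
proof -
  have "wcount a k * 1 \<le> wcount a k * wcount (b - a) k" using wcount_pos[OF assms(1)] by simp
  also have "\<dots> \<le> wcount b k" using supermult[of a k "b - a"] assms by simp
  finally show ?thesis by simp
qed

lemma wcount_pow:
  assumes "k \<ge> 1" "N * q \<le> n"
  shows "wcount N k ^ q \<le> wcount n k"
  using assms(2)
proof (induction q arbitrary: n)
  case 0 then show ?case using wcount_pos[OF assms(1)] by simp
next
  case (Suc q)
  have "wcount N k ^ Suc q = wcount N k * wcount N k ^ q" by simp
  also have "\<dots> \<le> wcount N k * wcount (n - N) k"
    using Suc.IH[of "n - N"] Suc.prems by (intro mult_left_mono) auto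
  also have "\<dots> \<le> wcount n k" using supermult[of N k "n - N"] Suc.prems by simp
  finally show ?case .
qed


fun build :: "nat \<Rightarrow> nat list \<Rightarrow> (nat \<Rightarrow> nat list) \<Rightarrow> nat list" where
  "build \<sigma> [] ys = []"
| "build \<sigma> (j # cs) ys = (j * \<sigma> + hd (ys j)) # build \<sigma> cs (ys(j := tl (ys j)))"

definition valid :: "nat \<Rightarrow> nat \<Rightarrow> nat list \<Rightarrow> (nat \<Rightarrow> nat list) \<Rightarrow> bool" where
  "valid \<sigma> k cs ys \<longleftrightarrow> set cs \<subseteq> {..<k} \<and>
     (\<forall>j<k. length (ys j) = count_list cs j \<and> sorted (ys j) \<and> set (ys j) \<subseteq> {1..\<sigma>})"

lemma build_len[simp]: "length (build \<sigma> cs ys) = length cs"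
  by (induction cs arbitrary: ys) auto

lemma in_tl: "x \<in> set (tl xs) \<Longrightarrow> x \<in> set xs"
  by (cases xs) auto

lemma valid_tail:
  assumes "valid \<sigma> k (j # cs) ys"
  shows "valid \<sigma> k cs (ys(j := tl (ys j)))" "j < k" "ys j \<noteq> []"
    "hd (ys j) \<in> set (ys j)" "hd (ys j) \<in> {1..\<sigma>}"
proof -
  show jk: "j < k" using assms unfolding valid_def by auto
  show ne: "ys j \<noteq> []" using assms jk unfolding valid_def by (metis count_list.simps(2) length_0_conv
     nat.simps(3) Suc_eq_plus1)
  show hs: "hd (ys j) \<in> set (ys j)" using ne by simp
  have "set (ys j) \<subseteq> {1..\<sigma>}" using assms jk unfolding valid_def by blast
  then show "hd (ys j) \<in> {1..\<sigma>}" using hs by blast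
  show "valid \<sigma> k cs (ys(j := tl (ys j)))"
    unfolding valid_def
  proof (intro conjI allI impI)
    show "set cs \<subseteq> {..<k}" using assms unfolding valid_def by auto
  next
    fix j' assume j': "j' < k"
    show "length ((ys(j := tl (ys j))) j') = count_list cs j'"
      using assms j' unfolding valid_def by (cases "j' = j") auto
    show "sorted ((ys(j := tl (ys j))) j')"
      using assms j' unfolding valid_def by (cases "j' = j") (auto simp: sorted_tl)
    show "set ((ys(j := tl (ys j))) j') \<subseteq> {1..\<sigma>}"
      using assms j' unfolding valid_def by (cases "j' = j") (auto dest: in_tl)
  qed
qed

lemma build_nth:
  assumes "valid \<sigma> k cs ys" "p < length cs"
  shows "\<exists>y\<in>set (ys (cs ! p)). build \<sigma> cs ys ! p = cs ! p * \<sigma> + y"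
  using assms
proof (induction cs arbitrary: ys p)
  case Nil then show ?case by simp
next
  case (Cons j cs)
  note vt = valid_tail[OF Cons.prems(1)]
  show ?case
  proof (cases p)
    case 0 then show ?thesis using vt by auto
  next
    case (Suc p')
    then have "p' < length cs" using Cons.prems by simp
    from Cons.IH[OF vt(1) this] obtain y where
      y: "y \<in> set ((ys(j := tl (ys j))) (cs ! p'))" "build \<sigma> cs (ys(j := tl (ys j))) ! p' = cs ! p' * \<sigma> + y"
      by blast
    have "y \<in> set (ys (cs ! p'))" using y(1) by (cases "cs ! p' = j") (auto dest: in_tl)
    then show ?thesis using y Suc by auto
  qed
qed

lemma build_range:
  assumes "valid \<sigma> k cs ys" "p < length cs"
  shows "cs ! p * \<sigma> < build \<sigma> cs ys ! p" "build \<sigma> cs ys ! p \<le> (cs ! p + 1) * \<sigma>" "cs ! p < k"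
proof -
  obtain y where y: "y \<in> set (ys (cs ! p))" "build \<sigma> cs ys ! p = cs ! p * \<sigma> + y"
    using build_nth[OF assms] by blast
  show ck: "cs ! p < k" using assms unfolding valid_def by (meson lessThan_iff nth_mem subsetD)
  then have "set (ys (cs ! p)) \<subseteq> {1..\<sigma>}" using assms unfolding valid_def by blast
  then have "y \<in> {1..\<sigma>}" using y by blast
  then show "cs ! p * \<sigma> < build \<sigma> cs ys ! p" "build \<sigma> cs ys ! p \<le> (cs ! p + 1) * \<sigma>" using y by auto
qed

lemma sorted_hd_tl: "sorted xs \<Longrightarrow> y \<in> set (tl xs) \<Longrightarrow> hd xs \<le> y"
  by (cases xs) auto

lemma build_mono:
  assumes "valid \<sigma> k cs ys" "p < q" "q < length cs" "cs ! p = cs ! q"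
  shows "build \<sigma> cs ys ! p \<le> build \<sigma> cs ys ! q"
  using assms
proof (induction cs arbitrary: ys p q)
  case Nil then show ?case by simp
next
  case (Cons j cs)
  note vt = valid_tail[OF Cons.prems(1)]
  obtain q' where q: "q = Suc q'" using Cons.prems by (cases q) auto
  show ?case
  proof (cases p)
    case 0
    then have cq: "cs ! q' = j" using Cons.prems q by simp
    have "q' < length cs" using Cons.prems q by simp
    from build_nth[OF vt(1) this] obtain y where
      y: "y \<in> set ((ys(j := tl (ys j))) (cs ! q'))" "build \<sigma> cs (ys(j := tl (ys j))) ! q' = cs ! q' * \<sigma> + y"
      by blast
    have "y \<in> set (tl (ys j))" using y(1) cq by simp
    moreover have "sorted (ys j)" using Cons.prems vt unfolding valid_def by auto
    ultimately have "hd (ys j) \<le> y" by (rule sorted_hd_tl[rotated])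
    then show ?thesis using 0 q y cq by simp
  next
    case (Suc p')
    have "build \<sigma> cs (ys(j := tl (ys j))) ! p' \<le> build \<sigma> cs (ys(j := tl (ys j))) ! q'"
      by (rule Cons.IH[OF vt(1)]) (use Cons.prems q Suc in auto)
    then show ?thesis using Suc q by simp
  qed
qed

lemma div_helper: "1 \<le> h \<Longrightarrow> h \<le> \<sigma> \<Longrightarrow> (j * \<sigma> + h - 1) div \<sigma> = (j::nat)"
proof -
  assume "1 \<le> h" "h \<le> \<sigma>"
  then have "j * \<sigma> + h - 1 = j * \<sigma> + (h - 1)" "h - 1 < \<sigma>" by auto
  then show ?thesis by simp
qed

lemma build_inj:
  assumes "valid \<sigma> k cs ys" "valid \<sigma> k cs' ys'" "length cs = length cs'"
    "build \<sigma> cs ys = build \<sigma> cs' ys'"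
  shows "cs = cs' \<and> (\<forall>j<k. ys j = ys' j)"
  using assms
proof (induction cs arbitrary: cs' ys ys')
  case Nil
  then have "cs' = []" by simp
  moreover have "\<forall>j<k. ys j = []" "\<forall>j<k. ys' j = []" using Nil unfolding valid_def by auto
  ultimately show ?case by simp
next
  case (Cons j cs)
  obtain j' cs'' where c': "cs' = j' # cs''" using Cons.prems by (cases cs') auto
  note vt = valid_tail[OF Cons.prems(1)]
  note vt' = valid_tail[OF Cons.prems(2)[unfolded c']]
  have h1: "hd (ys j) \<in> {1..\<sigma>}" using vt(5) .
  have h2: "hd (ys' j') \<in> {1..\<sigma>}" using vt'(5) .
  have he: "j * \<sigma> + hd (ys j) = j' * \<sigma> + hd (ys' j')" using Cons.prems(4) c' by simp
  then have "(j * \<sigma> + hd (ys j) - 1) div \<sigma> = (j' * \<sigma> + hd (ys' j') - 1) div \<sigma>" by simp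
  then have jj: "j = j'" using div_helper h1 h2 by simp
  then have hh: "hd (ys j) = hd (ys' j)" using he by simp
  have bt: "build \<sigma> cs (ys(j := tl (ys j))) = build \<sigma> cs'' (ys'(j := tl (ys' j)))"
    using Cons.prems(4) c' jj by simp
  have vt1: "valid \<sigma> k cs'' (ys'(j := tl (ys' j)))" using vt'(1) jj by simp
  have ln: "length cs = length cs''" using Cons.prems(3) c' by simp
  have "cs = cs'' \<and> (\<forall>i<k. (ys(j := tl (ys j))) i = (ys'(j := tl (ys' j))) i)"
    by (rule Cons.IH[OF vt(1) vt1 ln bt])
  then have ih: "cs = cs''" "\<forall>i<k. (ys(j := tl (ys j))) i = (ys'(j := tl (ys' j))) i" by auto
  have "ys j = ys' j"
  proof -
    have "tl (ys j) = tl (ys' j)" using ih(2) vt(2) by (metis fun_upd_same)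
    then show ?thesis using hh vt(3) vt'(3) jj by (metis list.collapse)
  qed
  moreover have "ys i = ys' i" if "i < k" "i \<noteq> j" for i using ih(2) that by (metis fun_upd_other)
  ultimately show ?case using ih(1) c' jj by metis
qed


definition SL :: "nat \<Rightarrow> nat \<Rightarrow> nat list set" where
  "SL \<sigma> t = {ys. sorted ys \<and> length ys = t \<and> set ys \<subseteq> {1..\<sigma>}}"

definition Abal :: "nat \<Rightarrow> nat \<Rightarrow> nat multiset" where
  "Abal k t = mset (concat (map (\<lambda>j. replicate t j) [0..<k]))"

definition Bal :: "nat \<Rightarrow> nat \<Rightarrow> nat list set" where
  "Bal k t = permutations_of_multiset (Abal k t)"

definition D0 :: "nat \<Rightarrow> nat \<Rightarrow> nat \<Rightarrow> (nat list \<times> (nat \<Rightarrow> nat list)) set" where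
  "D0 \<sigma> k t = Bal k t \<times> PiE {..<k} (\<lambda>_. SL \<sigma> t)"

lemma count_Abal: "count (Abal k t) j = (if j < k then t else 0)"
  unfolding Abal_def by (induction k) (auto simp: count_mset)

lemma size_Abal: "size (Abal k t) = k * t"
  unfolding Abal_def by (induction k) auto

lemma finite_SL: "finite (SL \<sigma> t)"
proof -
  have "SL \<sigma> t \<subseteq> {xs. set xs \<subseteq> {1..\<sigma>} \<and> length xs = t}" unfolding SL_def by auto
  then show ?thesis by (rule finite_subset) (simp add: finite_lists_length_eq)
qed

lemma finite_D0: "finite (D0 \<sigma> k t)"
  unfolding D0_def Bal_def using finite_SL by (intro finite_cartesian_product finite_PiE) auto

lemma D0_valid:
  assumes "d \<in> D0 \<sigma> k t"
  shows "valid \<sigma> k (fst d) (snd d)" "length (fst d) = k * t"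
proof -
  obtain cs ys where d: "d = (cs, ys)" "cs \<in> Bal k t" "ys \<in> PiE {..<k} (\<lambda>_. SL \<sigma> t)"
    using assms unfolding D0_def by auto
  have m: "mset cs = Abal k t" using d(2) unfolding Bal_def by (simp add: permutations_of_multisetD)
  have cnt: "count_list cs j = (if j < k then t else 0)" for j
    using m count_Abal by (metis count_mset)
  have "set cs \<subseteq> {..<k}"
  proof
    fix x assume "x \<in> set cs"
    then have "x \<in># Abal k t" using m by (metis set_mset_mset)
    then have "count (Abal k t) x > 0" by simp
    then show "x \<in> {..<k}" using count_Abal[of k t x] by (auto split: if_splits)
  qed
  moreover have "\<forall>j<k. length (ys j) = count_list cs j \<and> sorted (ys j) \<and> set (ys j) \<subseteq> {1..\<sigma>}"
    using d(3) cnt unfolding SL_def by auto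
  ultimately show "valid \<sigma> k (fst d) (snd d)" unfolding valid_def d by simp
  show "length (fst d) = k * t" using m size_Abal d by (metis fst_conv size_mset)
qed

fun words :: "nat \<Rightarrow> nat \<Rightarrow> (nat list \<times> (nat \<Rightarrow> nat list)) list \<Rightarrow> nat list" where
  "words \<sigma> b [] = []"
| "words \<sigma> b (d # ds) = map (\<lambda>x. x + b * \<sigma>) (build \<sigma> (fst d) (snd d)) @ words \<sigma> (Suc b) ds"

lemma words_len: "(\<forall>d\<in>set ds. length (fst d) = K) \<Longrightarrow> length (words \<sigma> b ds) = length ds * K"
  by (induction ds arbitrary: b) auto

lemma words_inv:
  assumes "\<forall>d\<in>set ds. valid \<sigma> k (fst d) (snd d)"
  shows "\<exists>c. (\<forall>p<length (words \<sigma> b ds). c p < k \<and> (b + c p) * \<sigma> < words \<sigma> b ds ! p) \<and>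
     (\<forall>p q. p < q \<and> q < length (words \<sigma> b ds) \<and> c p = c q \<longrightarrow> words \<sigma> b ds ! p \<le> words \<sigma> b ds ! q)"
  using assms
proof (induction ds arbitrary: b)
  case Nil then show ?case by simp
next
  case (Cons d ds)
  have ex: "\<exists>c. (\<forall>p<length (words \<sigma> (Suc b) ds). c p < k \<and> (Suc b + c p) * \<sigma> < words \<sigma> (Suc b) ds ! p) \<and>
    (\<forall>p q. p < q \<and> q < length (words \<sigma> (Suc b) ds) \<and> c p = c q \<longrightarrow> words \<sigma> (Suc b) ds ! p \<le> words \<sigma> (Suc b) ds ! q)"
    by (rule Cons.IH) (use Cons.prems in auto)
  then obtain c where c: "\<forall>p<length (words \<sigma> (Suc b) ds). c p < k \<and> (Suc b + c p) * \<sigma> < words \<sigma> (Suc b) ds ! p"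
    "\<forall>p q. p < q \<and> q < length (words \<sigma> (Suc b) ds) \<and> c p = c q \<longrightarrow> words \<sigma> (Suc b) ds ! p \<le> words \<sigma> (Suc b) ds ! q"
    by blast
  have vd: "valid \<sigma> k (fst d) (snd d)" using Cons.prems by auto
  let ?cs = "fst d" and ?K = "length (fst d)"
  let ?seg = "map (\<lambda>x. x + b * \<sigma>) (build \<sigma> (fst d) (snd d))"
  let ?rest = "words \<sigma> (Suc b) ds"
  have w: "words \<sigma> b (d # ds) = ?seg @ ?rest" by simp
  have ls: "length ?seg = ?K" by simp
  have nlo: "(?seg @ ?rest) ! p = build \<sigma> (fst d) (snd d) ! p + b * \<sigma>" if "p < ?K" for p
    using that by (simp add: nth_append)
  have nhi: "(?seg @ ?rest) ! p = ?rest ! (p - ?K)" if "p \<ge> ?K" for p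
    using that by (simp add: nth_append)
  define c' where "c' = (\<lambda>p. if p < ?K then ?cs ! p else c (p - ?K))"
  show ?case unfolding w
  proof (intro exI[of _ c'] conjI allI impI)
    fix p assume p: "p < length (?seg @ ?rest)"
    show "c' p < k"
      using p c(1) build_range(3)[OF vd] unfolding c'_def by (auto simp: nth_append)
    show "(b + c' p) * \<sigma> < (?seg @ ?rest) ! p"
    proof (cases "p < ?K")
      case True
      then show ?thesis using nlo[OF True] build_range(1)[OF vd True] unfolding c'_def
        by (simp add: algebra_simps)
    next
      case False
      then have "p - ?K < length ?rest" using p by simp
      then have "(Suc b + c (p - ?K)) * \<sigma> < ?rest ! (p - ?K)" using c(1) by blast
      moreover have "(b + c (p - ?K)) * \<sigma> \<le> (Suc b + c (p - ?K)) * \<sigma>" by simp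
      ultimately show ?thesis using nhi False unfolding c'_def by simp
    qed
  next
    fix p q assume h: "p < q \<and> q < length (?seg @ ?rest) \<and> c' p = c' q"
    show "(?seg @ ?rest) ! p \<le> (?seg @ ?rest) ! q"
    proof (cases "q < ?K")
      case True
      then have "?cs ! p = ?cs ! q" using h unfolding c'_def by auto
      then show ?thesis using build_mono[OF vd, of p q] h True nlo[of p] nlo[of q] by simp
    next
      case qK: False
      show ?thesis
      proof (cases "p < ?K")
        case True
        then have e: "?cs ! p = c (q - ?K)" using h qK unfolding c'_def by auto
        have "q - ?K < length ?rest" using h qK by auto
        then have "(Suc b + c (q - ?K)) * \<sigma> < ?rest ! (q - ?K)" using c(1) by blast
        moreover have "build \<sigma> (fst d) (snd d) ! p \<le> (?cs ! p + 1) * \<sigma>" using build_range(2)[OF vd True] .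
        ultimately show ?thesis using nlo[OF True] nhi[of q] qK e by (simp add: algebra_simps)
      next
        case False
        then have "p - ?K < q - ?K" "q - ?K < length ?rest" "c (p - ?K) = c (q - ?K)"
          using h qK unfolding c'_def by auto
        then have "?rest ! (p - ?K) \<le> ?rest ! (q - ?K)" using c(2) by blast
        then show ?thesis using nhi[of p] nhi[of q] False qK by simp
      qed
    qed
  qed
qed

lemma words_bound:
  assumes "\<forall>d\<in>set ds. valid \<sigma> k (fst d) (snd d)"
  shows "set (words \<sigma> b ds) \<subseteq> {1..(b + length ds + k - 1) * \<sigma>}"
  using assms
proof (induction ds arbitrary: b)
  case Nil then show ?case by simp
next
  case (Cons d ds)
  have vd: "valid \<sigma> k (fst d) (snd d)" using Cons.prems by auto
  have "set (map (\<lambda>x. x + b * \<sigma>) (build \<sigma> (fst d) (snd d))) \<subseteq> {1..(b + length (d # ds) + k - 1) * \<sigma>}"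
  proof
    fix y assume "y \<in> set (map (\<lambda>x. x + b * \<sigma>) (build \<sigma> (fst d) (snd d)))"
    then obtain p where p: "p < length (fst d)" "y = build \<sigma> (fst d) (snd d) ! p + b * \<sigma>"
      by (auto simp: in_set_conv_nth)
    have r1: "fst d ! p * \<sigma> < build \<sigma> (fst d) (snd d) ! p" using build_range(1)[OF vd p(1)] .
    have r2: "build \<sigma> (fst d) (snd d) ! p \<le> (fst d ! p + 1) * \<sigma>" using build_range(2)[OF vd p(1)] .
    have r3: "fst d ! p < k" using build_range(3)[OF vd p(1)] .
    have "(fst d ! p + 1) * \<sigma> + b * \<sigma> \<le> (b + length (d # ds) + k - 1) * \<sigma>"
    proof -
      have "fst d ! p + 1 + b \<le> b + length (d # ds) + k - 1" using r3 by simp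
      then have "(fst d ! p + 1 + b) * \<sigma> \<le> (b + length (d # ds) + k - 1) * \<sigma>" by (rule mult_right_mono) simp
      then show ?thesis by (simp add: algebra_simps)
    qed
    then show "y \<in> {1..(b + length (d # ds) + k - 1) * \<sigma>}" using p r1 r2 by auto
  qed
  moreover have "set (words \<sigma> (Suc b) ds) \<subseteq> {1..(b + length (d # ds) + k - 1) * \<sigma>}"
    using Cons.IH[of "Suc b"] Cons.prems by auto
  ultimately show ?case by auto
qed

lemma words_inj:
  assumes "length ds = length ds'" "\<forall>d\<in>set ds. d \<in> D0 \<sigma> k t" "\<forall>d\<in>set ds'. d \<in> D0 \<sigma> k t"
    "words \<sigma> b ds = words \<sigma> b ds'"
  shows "ds = ds'"
  using assms
proof (induction ds ds' arbitrary: b rule: list_induct2)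
  case Nil then show ?case by simp
next
  case (Cons d ds d' ds')
  have dd: "d \<in> D0 \<sigma> k t" "d' \<in> D0 \<sigma> k t" using Cons.prems by auto
  have l1: "length (fst d) = k * t" "length (fst d') = k * t" using D0_valid(2)[OF dd(1)] D0_valid(2)[OF dd(2)] by auto
  have "map (\<lambda>x. x + b * \<sigma>) (build \<sigma> (fst d) (snd d)) = map (\<lambda>x. x + b * \<sigma>) (build \<sigma> (fst d') (snd d'))
        \<and> words \<sigma> (Suc b) ds = words \<sigma> (Suc b) ds'"
    using Cons.prems(3) l1 by (simp add: append_eq_append_conv)
  moreover have "inj (\<lambda>x::nat. x + b * \<sigma>)" by (simp add: inj_def)
  ultimately have b1: "build \<sigma> (fst d) (snd d) = build \<sigma> (fst d') (snd d')" and
     r: "words \<sigma> (Suc b) ds = words \<sigma> (Suc b) ds'" by (auto simp: inj_map_eq_map)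
  have "fst d = fst d' \<and> (\<forall>j<k. snd d j = snd d' j)"
    using build_inj[OF D0_valid(1)[OF dd(1)] D0_valid(1)[OF dd(2)] _ b1] l1 by auto
  moreover have "snd d \<in> PiE {..<k} (\<lambda>_. SL \<sigma> t)" "snd d' \<in> PiE {..<k} (\<lambda>_. SL \<sigma> t)"
    using Cons.prems unfolding D0_def by auto
  ultimately have "d = d'" by (metis PiE_ext lessThan_iff prod.expand)
  moreover have "ds = ds'" using Cons.IH[OF _ _ r] Cons.prems by auto
  ultimately show ?case by simp
qed


lemma lower_construct:
  assumes k: "k \<ge> 1" and s: "\<sigma> \<ge> 1" and n1: "B * (k * t) \<le> n'" and n2: "(B + k - 1) * \<sigma> \<le> n'"
  shows "card (D0 \<sigma> k t) ^ B \<le> wcount n' k"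
proof -
  let ?L = "B * (k * t)"
  define Ds where "Ds = {ds. set ds \<subseteq> D0 \<sigma> k t \<and> length ds = B}"
  define f where "f = (\<lambda>ds. words \<sigma> 0 ds @ replicate (n' - ?L) n')"
  have lw: "length (words \<sigma> 0 ds) = ?L" if "ds \<in> Ds" for ds
  proof -
    have "\<forall>d\<in>set ds. length (fst d) = k * t"
    proof
      fix d assume "d \<in> set ds" then have "d \<in> D0 \<sigma> k t" using that unfolding Ds_def by auto
      then show "length (fst d) = k * t" by (rule D0_valid(2))
    qed
    then show ?thesis using words_len[of ds "k * t" \<sigma> 0] that unfolding Ds_def by auto
  qed
  have vds: "\<forall>d\<in>set ds. valid \<sigma> k (fst d) (snd d)" if "ds \<in> Ds" for ds
  proof
    fix d assume "d \<in> set ds" then have "d \<in> D0 \<sigma> k t" using that unfolding Ds_def by auto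
    then show "valid \<sigma> k (fst d) (snd d)" by (rule D0_valid(1))
  qed
  have inW: "f ds \<in> Wset n' k" if ds: "ds \<in> Ds" for ds
  proof -
    let ?w = "words \<sigma> 0 ds"
    have len: "length (f ds) = n'" using lw[OF ds] n1 unfolding f_def by simp
    have wb: "set ?w \<subseteq> {1..(0 + length ds + k - 1) * \<sigma>}" using words_bound[OF vds[OF ds]] .
    then have wb': "set ?w \<subseteq> {1..n'}" using n2 ds unfolding Ds_def by auto
    have "set (replicate (n' - ?L) n') \<subseteq> {1..n'}" by (cases "n' - ?L = 0") auto
    then have st: "set (f ds) \<subseteq> {1..n'}" using wb' unfolding f_def by auto
    obtain c where c: "\<forall>p<length ?w. c p < k \<and> (0 + c p) * \<sigma> < ?w ! p"
      "\<forall>p q. p < q \<and> q < length ?w \<and> c p = c q \<longrightarrow> ?w ! p \<le> ?w ! q"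
      using words_inv[OF vds[OF ds], of 0] by blast
    define c' where "c' = (\<lambda>p. if p < ?L then c p else 0)"
    have nlo: "f ds ! p = ?w ! p" if "p < ?L" for p using that lw[OF ds] unfolding f_def by (simp add: nth_append)
    have nhi: "f ds ! p = n'" if "p \<ge> ?L" "p < n'" for p using that lw[OF ds] n1 unfolding f_def by (simp add: nth_append)
    have "classfun (f ds) k c'"
      unfolding classfun_def
    proof (intro conjI allI impI)
      fix p assume "p < length (f ds)"
      then show "c' p < k" using c(1) k lw[OF ds] unfolding c'_def by auto
    next
      fix p q assume h: "p < q \<and> q < length (f ds) \<and> c' p = c' q"
      show "f ds ! p \<le> f ds ! q"
      proof (cases "q < ?L")
        case True then show ?thesis using h c(2) nlo lw[OF ds] unfolding c'_def by auto
      next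
        case False
        then have "f ds ! q = n'" using nhi h len by auto
        moreover have "f ds ! p \<in> {1..n'}" using st h by (meson less_trans nth_mem subsetD)
        ultimately show ?thesis by simp
      qed
    qed
    then have "\<not> has_decr_subseq (f ds) (k + 1)" by (rule classfun_avoid)
    then show ?thesis using len st unfolding Wset_def by simp
  qed
  have inj: "inj_on f Ds"
  proof (rule inj_onI)
    fix ds ds' assume ds: "ds \<in> Ds" and ds': "ds' \<in> Ds" and e: "f ds = f ds'"
    then have "words \<sigma> 0 ds = words \<sigma> 0 ds'" using lw[OF ds] lw[OF ds'] unfolding f_def by simp
    then have we: "words \<sigma> 0 ds = words \<sigma> 0 ds'" .
    show "ds = ds'"
    proof (rule words_inj[where b=0 and \<sigma>=\<sigma> and k=k and t=t])
      show "length ds = length ds'" using ds ds' unfolding Ds_def by simp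
      show "\<forall>d\<in>set ds. d \<in> D0 \<sigma> k t" "\<forall>d\<in>set ds'. d \<in> D0 \<sigma> k t" using ds ds' unfolding Ds_def by auto
      show "words \<sigma> 0 ds = words \<sigma> 0 ds'" by (rule we)
    qed
  qed
  have "card Ds \<le> card (Wset n' k)"
    using card_inj_on_le[OF inj] inW finite_Wset by blast
  moreover have "card Ds = card (D0 \<sigma> k t) ^ B" unfolding Ds_def using card_lists_length_eq[OF finite_D0] by simp
  ultimately show ?thesis by (simp add: wcount_Wset)
qed

lemma card_D0: "card (D0 \<sigma> k t) = card (Bal k t) * card (SL \<sigma> t) ^ k"
  unfolding D0_def by (simp add: card_cartesian_product card_PiE)

lemma card_Bal:
  assumes "t \<ge> 1"
  shows "card (Bal k t) * fact t ^ k = fact (k * t)"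
proof -
  have sm: "set_mset (Abal k t) = {..<k}" using count_Abal[of k t] assms
    by (auto simp: set_mset_def split: if_splits)
  have "card (Bal k t) * (\<Prod>x\<in>set_mset (Abal k t). fact (count (Abal k t) x)) = fact (size (Abal k t))"
    unfolding Bal_def by (rule card_permutations_of_multiset_aux)
  moreover have "(\<Prod>x\<in>set_mset (Abal k t). fact (count (Abal k t) x)) = (fact t ^ k :: nat)"
    unfolding sm by (simp add: count_Abal)
  ultimately show ?thesis by (simp add: size_Abal)
qed

lemma take_sum_mono: "a \<le> b \<Longrightarrow> sum_list (take a d) \<le> sum_list (take b (d :: nat list))"
proof -
  assume "a \<le> b"
  then have "take b d = take a d @ take (b - a) (drop a d)" by (metis le_add_diff_inverse take_add)
  then show ?thesis by simp
qed

lemma nth_from_sums: "i < length d \<Longrightarrow> d ! i = sum_list (take (Suc i) d) - sum_list (take i (d :: nat list))"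
  by (simp add: take_Suc_conv_app_nth)

lemma card_SL:
  assumes "\<sigma> \<ge> 1"
  shows "(\<sigma> - 1 + t) choose t \<le> card (SL \<sigma> t)"
proof -
  define Dl where "Dl = {l :: nat list. length l = t + 1 \<and> sum_list l = \<sigma> - 1}"
  define ps where "ps = (\<lambda>d::nat list. map (\<lambda>i. 1 + sum_list (take (Suc i) d)) [0..<t])"
  have cDl: "card Dl = (\<sigma> - 1 + t) choose t"
  proof -
    have "card Dl = (\<sigma> - 1 + (t + 1) - 1) choose (\<sigma> - 1)" unfolding Dl_def by (rule card_length_sum_list)
    also have "\<dots> = (\<sigma> - 1 + t) choose t" using binomial_symmetric[of t "\<sigma> - 1 + t"] by simp
    finally show ?thesis .
  qed
  have inS: "ps d \<in> SL \<sigma> t" if "d \<in> Dl" for d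
  proof -
    have "sorted (ps d)" unfolding ps_def sorted_iff_nth_mono by (auto intro: take_sum_mono)
    moreover have "set (ps d) \<subseteq> {1..\<sigma>}"
    proof
      fix y assume "y \<in> set (ps d)"
      then obtain i where "y = 1 + sum_list (take (Suc i) d)" unfolding ps_def by auto
      moreover have "sum_list (take (Suc i) d) \<le> sum_list (take (length d) d)" using take_sum_mono
        by (metis nat_le_linear take_all)
      ultimately show "y \<in> {1..\<sigma>}" using that assms unfolding Dl_def by auto
    qed
    ultimately show ?thesis unfolding SL_def ps_def by simp
  qed
  have inj: "inj_on ps Dl"
  proof (rule inj_onI)
    fix d d' assume d: "d \<in> Dl" and d': "d' \<in> Dl" and e: "ps d = ps d'"
    have S: "sum_list (take i d) = sum_list (take i d')" if ii: "i \<le> t + 1" for i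
    proof (cases "i = 0")
      case True then show ?thesis by simp
    next
      case False
      show ?thesis
      proof (cases "i = t + 1")
        case True then show ?thesis using d d' unfolding Dl_def by simp
      next
        case ne: False
        then obtain i' where i': "i = Suc i'" "i' < t" using \<open>i \<noteq> 0\<close> ii ne by (cases i) auto
        then have "ps d ! i' = ps d' ! i'" using e by simp
        then show ?thesis using i' unfolding ps_def by simp
      qed
    qed
    show "d = d'"
    proof (rule nth_equalityI)
      show "length d = length d'" using d d' unfolding Dl_def by simp
      fix i assume i: "i < length d"
      then have "i + 1 \<le> t + 1" using d unfolding Dl_def by simp
      then show "d ! i = d' ! i" using nth_from_sums[OF i] nth_from_sums[of i d'] S[of i] S[of "Suc i"] i d d'
        unfolding Dl_def by simp
    qed
  qed
  have "card Dl \<le> card (SL \<sigma> t)" using card_inj_on_le[OF inj] inS finite_SL by blast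
  then show ?thesis using cDl by simp
qed


lemma binom_step:
  assumes "i < N"
  shows "real (N choose Suc i) * real b ^ Suc i * real (N - b) ^ (N - Suc i) * (real i + 1) * real (N - b)
       = real (N choose i) * real b ^ i * real (N - b) ^ (N - i) * (real N - real i) * real b"
proof -
  have e1: "Suc i * (N choose Suc i) = (N - i) * (N choose i)"
    using binomial_absorption[of i N] binomial_absorb_comp[of N i] by simp
  then have e1': "real (N choose Suc i) * (real i + 1) = real (N choose i) * (real N - real i)"
    using assms by (metis (mono_tags, lifting) add.commute less_imp_le_nat mult.commute of_nat_Suc of_nat_diff of_nat_mult)
  have e2: "real (N - b) ^ (N - i) = real (N - b) ^ (N - Suc i) * real (N - b)"
    using assms by (metis Suc_diff_Suc power_Suc2)
  have "real (N choose Suc i) * real b ^ Suc i * real (N - b) ^ (N - Suc i) * (real i + 1) * real (N - b)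
     = (real (N choose Suc i) * (real i + 1)) * real b * real b ^ i * (real (N - b) ^ (N - Suc i) * real (N - b))"
    by (simp add: mult_ac)
  also have "\<dots> = (real (N choose i) * (real N - real i)) * real b * real b ^ i * real (N - b) ^ (N - i)"
    using e1' e2 by simp
  also have "\<dots> = real (N choose i) * real b ^ i * real (N - b) ^ (N - i) * (real N - real i) * real b"
    by (simp add: mult_ac)
  finally show ?thesis .
qed

lemma binom_lower:
  assumes "b \<le> N"
  shows "real N ^ N \<le> real (N + 1) * (real (N choose b) * real b ^ b * real (N - b) ^ (N - b))"
proof -
  define T where "T = (\<lambda>i. real (N choose i) * real b ^ i * real (N - b) ^ (N - i))"
  have Tnn: "T i \<ge> 0" for i unfolding T_def by simp
  have st: "T (Suc i) * (real i + 1) * real (N - b) = T i * (real N - real i) * real b" if "i < N" for i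
    using binom_step[OF that, of b] unfolding T_def by simp
  have up: "T i \<le> T (Suc i)" if "i < b" for i
  proof (cases "N = b")
    case True
    then have "T i = 0" using that unfolding T_def by simp
    then show ?thesis using Tnn by simp
  next
    case False
    then have Nb: "real (N - b) > 0" using assms by simp
    have iN: "i < N" using that assms by simp
    have "(real N - real i) * real b \<ge> (real i + 1) * real (N - b)"
    proof -
      have "real (N - b) = real N - real b" using assms by simp
      moreover have "real i + 1 \<le> real b" using that by simp
      ultimately have "(real N - real i) * real b - (real i + 1) * real (N - b) = real N * (real b - real i - 1) + real b"
        by (simp add: algebra_simps)
      moreover have "real N * (real b - real i - 1) \<ge> 0" using \<open>real i + 1 \<le> real b\<close> by simp
      ultimately show ?thesis by simp
    qed
    then have "T i * ((real i + 1) * real (N - b)) \<le> T i * ((real N - real i) * real b)"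
      using Tnn by (intro mult_left_mono) auto
    also have "\<dots> = T (Suc i) * ((real i + 1) * real (N - b))" using st[OF iN] by (simp add: algebra_simps)
    finally have "T i * ((real i + 1) * real (N - b)) \<le> T (Suc i) * ((real i + 1) * real (N - b))" .
    moreover have "(real i + 1) * real (N - b) > 0" using Nb by simp
    ultimately show ?thesis by (rule mult_right_le_imp_le)
  qed
  have down: "T (Suc i) \<le> T i" if "b \<le> i" "i < N" for i
  proof -
    have Nb: "real (N - b) > 0" using that by simp
    have "(real N - real i) * real b \<le> (real i + 1) * real (N - b)"
    proof -
      have "real (N - b) = real N - real b" using assms by simp
      moreover have "real b \<le> real i" "real i \<le> real N" using that by auto
      ultimately have "(real i + 1) * real (N - b) - (real N - real i) * real b = real N * (real i - real b) + real N - real b"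
        by (simp add: algebra_simps)
      moreover have "real N * (real i - real b) \<ge> 0" using \<open>real b \<le> real i\<close> by simp
      ultimately show ?thesis using assms by simp
    qed
    then have "T i * ((real N - real i) * real b) \<le> T i * ((real i + 1) * real (N - b))"
      using Tnn by (intro mult_left_mono) auto
    then have "T (Suc i) * ((real i + 1) * real (N - b)) \<le> T i * ((real i + 1) * real (N - b))"
      using st[OF that(2)] by (simp add: algebra_simps)
    moreover have "(real i + 1) * real (N - b) > 0" using Nb by simp
    ultimately show ?thesis by (rule mult_right_le_imp_le)
  qed
  have lo: "T (b - j) \<le> T b" if "j \<le> b" for j
    using that
  proof (induction j)
    case 0 then show ?case by simp
  next
    case (Suc j)
    have "b - Suc j < b" using Suc.prems by simp
    then have "T (b - Suc j) \<le> T (Suc (b - Suc j))" by (rule up)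
    also have "Suc (b - Suc j) = b - j" using Suc.prems by simp
    finally show ?case using Suc by simp
  qed
  have hi: "T (b + j) \<le> T b" if "b + j \<le> N" for j
    using that
  proof (induction j)
    case 0 then show ?case by simp
  next
    case (Suc j)
    have "T (Suc (b + j)) \<le> T (b + j)" by (rule down) (use Suc.prems in auto)
    then show ?case using Suc by simp
  qed
  have all: "T i \<le> T b" if "i \<le> N" for i
  proof (cases "i \<le> b")
    case True then show ?thesis using lo[of "b - i"] by simp
  next
    case False then show ?thesis using hi[of "i - b"] that by simp
  qed
  have "real N ^ N = (real b + real (N - b)) ^ N" using assms by simp
  also have "\<dots> = (\<Sum>i\<le>N. T i)" unfolding T_def by (simp add: binomial_ring)
  also have "\<dots> \<le> real (card {..N}) * T b" by (rule sum_bounded_above) (use all in auto)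
  finally show ?thesis unfolding T_def by simp
qed


lemma multi_bound:
  assumes "t \<ge> 1"
  shows "real k ^ (k*t) * real (fact t) ^ k \<le> real (fact (k*t)) * real (k*t+1) ^ k"
proof (induction k)
  case 0 then show ?case by simp
next
  case (Suc k)
  define N where "N = Suc k * t"
  define C where "C = real (N choose t)"
  have Nt: "N - t = k * t" "t \<le> N" unfolding N_def by auto
  have fN0: "fact t * fact (k*t) * (N choose t) = fact N"
    using binomial_fact_lemma[OF Nt(2)] unfolding Nt(1) .
  have fN: "real (fact N) = real (fact t) * real (fact (k*t)) * C"
    unfolding C_def fN0[symmetric] by (simp only: of_nat_mult)
  have mt: "real N ^ N \<le> real (N + 1) * (C * real t ^ t * real (k*t) ^ (k*t))"
    using binom_lower[OF Nt(2)] unfolding Nt(1) C_def .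
  have e1: "real N ^ N = real (Suc k) ^ N * real t ^ N"
  proof -
    have "real N = real (Suc k) * real t" unfolding N_def by (simp only: of_nat_mult)
    then show ?thesis by (simp only: power_mult_distrib)
  qed
  have e2: "real t ^ t * real (k*t) ^ (k*t) = real k ^ (k*t) * real t ^ N"
  proof -
    have "real (k*t) ^ (k*t) = real k ^ (k*t) * real t ^ (k*t)" by (simp only: of_nat_mult power_mult_distrib)
    moreover have "real t ^ N = real t ^ t * real t ^ (k*t)" unfolding N_def by (simp add: power_add[symmetric])
    ultimately show ?thesis by (simp only: mult_ac)
  qed
  have tN: "real t ^ N > 0" using assms by simp
  have mt': "real (Suc k) ^ N * real t ^ N \<le> (real (N + 1) * C * real k ^ (k*t)) * real t ^ N"
  proof -
    have "real (Suc k) ^ N * real t ^ N = real N ^ N" using e1 by simp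
    also have "\<dots> \<le> real (N + 1) * (C * real t ^ t * real (k*t) ^ (k*t))" by (rule mt)
    also have "C * real t ^ t * real (k*t) ^ (k*t) = C * (real t ^ t * real (k*t) ^ (k*t))" by (simp only: mult.assoc)
    also have "\<dots> = C * (real k ^ (k*t) * real t ^ N)" by (simp only: e2)
    also have "real (N + 1) * (C * (real k ^ (k*t) * real t ^ N)) = (real (N + 1) * C * real k ^ (k*t)) * real t ^ N"
      by (simp only: mult.assoc)
    finally show ?thesis .
  qed
  have b1: "real (Suc k) ^ N \<le> real (N + 1) * C * real k ^ (k*t)"
    using mt' tN by (rule mult_right_le_imp_le)
  have ih: "real k ^ (k*t) * real (fact t) ^ k \<le> real (fact (k*t)) * real (k*t+1) ^ k" by (rule Suc.IH)
  have "real (Suc k) ^ (Suc k * t) * real (fact t) ^ Suc k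
      = real (Suc k) ^ N * (real (fact t) ^ k * real (fact t))" unfolding N_def by (simp only: power_Suc2)
  also have "\<dots> \<le> (real (N + 1) * C * real k ^ (k*t)) * (real (fact t) ^ k * real (fact t))"
    using b1 by (rule mult_right_mono) simp
  also have "\<dots> = (real (N + 1) * C * real (fact t)) * (real k ^ (k*t) * real (fact t) ^ k)" by (simp only: mult_ac)
  also have "\<dots> \<le> (real (N + 1) * C * real (fact t)) * (real (fact (k*t)) * real (k*t+1) ^ k)"
    using ih by (rule mult_left_mono) (simp add: C_def)
  also have "\<dots> = real (fact N) * (real (N + 1) * real (k*t+1) ^ k)" unfolding fN by (simp only: mult_ac)
  also have "\<dots> \<le> real (fact N) * (real (N + 1) * real (N+1) ^ k)"
  proof -
    have "real (k*t+1) ^ k \<le> real (N+1) ^ k" unfolding N_def by (intro power_mono) auto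
    then show ?thesis by (intro mult_left_mono) auto
  qed
  also have "\<dots> = real (fact (Suc k * t)) * real (Suc k * t + 1) ^ Suc k" unfolding N_def by (simp only: power_Suc)
  finally show ?case .
qed

lemma ln_binom_lower:
  assumes "s \<ge> 1" "t \<ge> 1"
  shows "(real s + real t) * ln (real s + real t) - real s * ln (real s) - real t * ln (real t) - ln (real s + real t + 1)
     \<le> ln (real ((s + t) choose t))"
proof -
  have "real (s+t) ^ (s+t) \<le> real (s + t + 1) * (real ((s+t) choose t) * real t ^ t * real s ^ s)"
    using binom_lower[of t "s+t"] by simp
  moreover have "real ((s+t) choose t) > 0" by simp
  ultimately have "ln (real (s+t) ^ (s+t)) \<le> ln (real (s + t + 1) * (real ((s+t) choose t) * real t ^ t * real s ^ s))"
    using assms by (intro ln_mono) auto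
  also have "\<dots> = ln (real (s + t + 1)) + ln (real ((s+t) choose t)) + real t * ln (real t) + real s * ln (real s)"
    using assms by (simp add: ln_mult ln_realpow)
  finally have h: "ln (real (s+t) ^ (s+t)) \<le> ln (real (s + t + 1)) + ln (real ((s+t) choose t)) + real t * ln (real t) + real s * ln (real s)" .
  have "ln (real (s+t) ^ (s+t)) = (real s + real t) * ln (real s + real t)"
    using assms by (subst ln_realpow) auto
  moreover have "ln (real (s + t + 1)) = ln (real s + real t + 1)" by simp
  ultimately show ?thesis using h by linarith
qed

lemma log_lower:
  assumes k: "k \<ge> 1" and B: "B \<ge> 1" and m: "m \<ge> 1"
    and a_def: "a = B + k - 1" and s_def: "s = k * B * m" and t_def: "t = a * m"
  shows "real B * (real (k*t) * ln (real k) - real k * ln (real (k*t) + 1)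
      + real k * ((real s + real t) * ln (real s + real t) - real s * ln (real s) - real t * ln (real t) - ln (real s + real t + 1)))
      \<le> ln (real (wcount (a * (s + 1)) k))"
proof -
  have a1: "a \<ge> 1" and s1: "s \<ge> 1" and t1: "t \<ge> 1" using k B m unfolding a_def s_def t_def by auto
  let ?n = "a * (s + 1)"
  have c1: "B * (k * t) \<le> ?n" unfolding s_def t_def by (simp add: algebra_simps)
  have c2: "(B + k - 1) * (s + 1) \<le> ?n" unfolding a_def by simp
  have W: "card (D0 (s+1) k t) ^ B \<le> wcount ?n k" using lower_construct[OF k _ c1 c2] by simp
  define cB where "cB = card (Bal k t)"
  define cS where "cS = card (SL (s+1) t)"
  have cBe: "cB * fact t ^ k = fact (k * t)" unfolding cB_def using card_Bal[OF t1] .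
  have cB0: "cB > 0" using cBe by (metis fact_gt_zero gr0I mult_is_0)
  have cS1: "(s + t) choose t \<le> cS" unfolding cS_def using card_SL[of "s+1" t] by simp
  have cS0: "cS > 0" using cS1 by (metis binomial_eq_0_iff gr0I le_zero_eq not_add_less2)
  have lnB: "real (k*t) * ln (real k) - real k * ln (real (k*t) + 1) \<le> ln (real cB)"
  proof -
    have "real k ^ (k*t) * real (fact t) ^ k \<le> real (fact (k*t)) * real (k*t+1) ^ k" by (rule multi_bound[OF t1])
    also have "real (fact (k*t)) = real cB * real (fact t) ^ k"
      by (simp only: cBe[symmetric] of_nat_mult of_nat_power)
    also have "real cB * real (fact t) ^ k * real (k*t+1) ^ k = real cB * real (k*t+1) ^ k * real (fact t) ^ k"
      by (simp only: mult_ac)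
    finally have "real k ^ (k*t) * real (fact t) ^ k \<le> real cB * real (k*t+1) ^ k * real (fact t) ^ k" .
    moreover have "real (fact t) ^ k > 0" by simp
    ultimately have "real k ^ (k*t) \<le> real cB * real (k*t+1) ^ k"
      by (rule mult_right_le_imp_le)
    then have "ln (real k ^ (k*t)) \<le> ln (real cB * real (k*t+1) ^ k)" using k by (intro ln_mono) auto
    moreover have "ln (real k ^ (k*t)) = real (k*t) * ln (real k)" using k by (subst ln_realpow) auto
    moreover have "ln (real cB * real (k*t+1) ^ k) = ln (real cB) + real k * ln (real (k*t) + 1)"
    proof -
      have "ln (real cB * real (k*t+1) ^ k) = ln (real cB) + ln (real (k*t+1) ^ k)"
      proof -
        have "(1::real) + real k * real t \<noteq> 0" by (smt (verit) of_nat_0_le_iff mult_nonneg_nonneg)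
        then show ?thesis using cB0 by (simp add: ln_mult)
      qed
      also have "ln (real (k*t+1) ^ k) = real k * ln (real (k*t+1))" by (subst ln_realpow) auto
      also have "real (k*t+1) = real (k*t) + 1" by simp
      finally show ?thesis by (simp only: of_nat_add of_nat_1)
    qed
    ultimately show ?thesis by linarith
  qed
  have lnS: "(real s + real t) * ln (real s + real t) - real s * ln (real s) - real t * ln (real t) - ln (real s + real t + 1)
     \<le> ln (real cS)"
  proof -
    have "(s + t) choose t > 0" by (simp add: zero_less_binomial)
    then have "ln (real ((s+t) choose t)) \<le> ln (real cS)" using cS1 by (intro ln_mono) auto
    then show ?thesis using ln_binom_lower[OF s1 t1] by linarith
  qed
  have Wr: "real (card (D0 (s+1) k t) ^ B) \<le> real (wcount ?n k)" using W by (simp only: of_nat_le_iff)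
  have pos: "real (card (D0 (s+1) k t) ^ B) > 0" using cB0 cS0 by (simp add: card_D0 cB_def cS_def)
  have "ln (real (wcount ?n k)) \<ge> ln (real (card (D0 (s+1) k t) ^ B))"
    using Wr pos by (intro ln_mono) auto
  moreover have "ln (real (card (D0 (s+1) k t) ^ B)) = real B * (ln (real cB) + real k * ln (real cS))"
  proof -
    have cd: "card (D0 (s+1) k t) = cB * cS ^ k" unfolding cB_def cS_def by (rule card_D0)
    have p1: "real cB * real cS ^ k > 0" using cB0 cS0 by simp
    have "ln (real (card (D0 (s+1) k t) ^ B)) = ln ((real cB * real cS ^ k) ^ B)" unfolding cd by simp
    also have "\<dots> = real B * ln (real cB * real cS ^ k)" using p1 by (simp add: ln_realpow)
    also have "ln (real cB * real cS ^ k) = ln (real cB) + ln (real cS ^ k)" using cB0 cS0 by (simp add: ln_mult)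
    also have "ln (real cS ^ k) = real k * ln (real cS)" using cS0 by (simp add: ln_realpow)
    finally show ?thesis .
  qed
  ultimately have h1: "real B * (ln (real cB) + real k * ln (real cS)) \<le> ln (real (wcount ?n k))" by simp
  have h2: "real B * (real (k*t) * ln (real k) - real k * ln (real (k*t) + 1)
      + real k * ((real s + real t) * ln (real s + real t) - real s * ln (real s) - real t * ln (real t) - ln (real s + real t + 1)))
      \<le> real B * (ln (real cB) + real k * ln (real cS))"
  proof -
    have "real k * ((real s + real t) * ln (real s + real t) - real s * ln (real s) - real t * ln (real t) - ln (real s + real t + 1))
      \<le> real k * ln (real cS)" using lnS by (rule mult_left_mono) simp
    with lnB have "real (k*t) * ln (real k) - real k * ln (real (k*t) + 1)
      + real k * ((real s + real t) * ln (real s + real t) - real s * ln (real s) - real t * ln (real t) - ln (real s + real t + 1))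
      \<le> ln (real cB) + real k * ln (real cS)" by (rule add_mono)
    then show ?thesis by (rule mult_left_mono) simp
  qed
  from h2 h1 show ?thesis by (rule order_trans)
qed


definition LBraw :: "nat \<Rightarrow> nat \<Rightarrow> nat \<Rightarrow> real" where
  "LBraw B k m = real B * (real (k * ((B+k-1)*m)) * ln (real k) - real k * ln (real (k * ((B+k-1)*m)) + 1)
      + real k * ((real (k*B*m) + real ((B+k-1)*m)) * ln (real (k*B*m) + real ((B+k-1)*m))
          - real (k*B*m) * ln (real (k*B*m)) - real ((B+k-1)*m) * ln (real ((B+k-1)*m))
          - ln (real (k*B*m) + real ((B+k-1)*m) + 1)))"

lemma log_lower':
  assumes "k \<ge> 1" "B \<ge> 1" "m \<ge> 1"
  shows "LBraw B k m \<le> ln (real (wcount ((B+k-1) * (k*B*m + 1)) k))"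
  unfolding LBraw_def using log_lower[OF assms refl refl refl] .

lemma LB_identity:
  fixes B k m :: nat
  assumes k: "k \<ge> 1" and B: "B \<ge> 1" and m: "m \<ge> 1"
  shows "LBraw B k m = real B * real k * (real m * (real (B+k-1) * ln (real k)
           + ((real (B+k-1) + real (k*B)) * ln (real (B+k-1) + real (k*B)) - real (k*B) * ln (real (k*B))
              - real (B+k-1) * ln (real (B+k-1))))
           - ln (real k * real (B+k-1) * real m + 1) - ln ((real (B+k-1) + real (k*B)) * real m + 1))"
proof -
  define A where "A = real (B+k-1)"
  define b where "b = real (k*B)"
  define K where "K = real k"
  define M where "M = real m"
  have A0: "A > 0" and b0: "b > 0" and K0: "K > 0" and M0: "M > 0" using k B m unfolding A_def b_def K_def M_def by auto
  have s: "real (k*B*m) = b * M" unfolding b_def M_def by simp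
  have t: "real ((B+k-1)*m) = A * M" unfolding A_def M_def by (simp only: of_nat_mult)
  have kt: "real (k * ((B+k-1)*m)) = K * A * M" unfolding A_def M_def K_def by (simp only: of_nat_mult mult.assoc)
  have l1: "ln (b * M + A * M) = ln (A + b) + ln M"
  proof -
    have "b * M + A * M = (A + b) * M" by (simp add: algebra_simps)
    then show ?thesis using A0 b0 M0 by (simp add: ln_mult)
  qed
  have l2: "ln (b * M) = ln b + ln M" using b0 M0 by (simp add: ln_mult)
  have l3: "ln (A * M) = ln A + ln M" using A0 M0 by (simp add: ln_mult)
  have e: "b * M + A * M + 1 = (A + b) * M + 1" by (simp add: algebra_simps)
  have "LBraw B k m = real B * (K * A * M * ln K - K * ln (K * A * M + 1)
      + K * ((b * M + A * M) * ln (b * M + A * M) - b * M * ln (b * M) - A * M * ln (A * M)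
          - ln (b * M + A * M + 1)))"
    unfolding LBraw_def s t kt K_def by simp
  also have "\<dots> = real B * K * (M * (A * ln K + ((A + b) * ln (A + b) - b * ln b - A * ln A))
           - ln (K * A * M + 1) - ln ((A + b) * M + 1))"
    unfolding l1 l2 l3 e by (simp add: algebra_simps)
  finally show ?thesis unfolding A_def b_def K_def M_def .
qed

lemma asy1: "(A::real) > 0 \<Longrightarrow> (b::real) > 0 \<Longrightarrow> (K::real) > 0 \<Longrightarrow>
  ((\<lambda>m::nat. (ln (K*A*real m+1) + ln ((A+b)*real m+1))/(A*(b*real m+1))) \<longlonglongrightarrow> 0)"
  by real_asymp

lemma asy2': "(A::real) > 0 \<Longrightarrow> (b::real) > 0 \<Longrightarrow> ((\<lambda>m::nat. real m/(A*(b*real m+1))) \<longlonglongrightarrow> inverse A * inverse b)"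
  by real_asymp

lemma asy2: "(A::real) > 0 \<Longrightarrow> (b::real) > 0 \<Longrightarrow> ((\<lambda>m::nat. real m/(A*(b*real m+1))) \<longlonglongrightarrow> 1/(A*b))"
  using asy2'[of A b] by (simp add: inverse_mult_distrib divide_inverse)

lemma asy3: "(K::real) > 0 \<Longrightarrow> ((\<lambda>B::nat. K * real B / (real B + K - 1)) \<longlonglongrightarrow> K)"
  by real_asymp

lemma F_lim:
  fixes B k :: nat
  assumes k: "k \<ge> 1" and B: "B \<ge> 1"
  shows "(\<lambda>m. LBraw B k m / real ((B+k-1)*(k*B*m+1))) \<longlonglongrightarrow>
     (real (B+k-1) * ln (real k) + ((real (B+k-1) + real (k*B)) * ln (real (B+k-1) + real (k*B))
        - real (k*B) * ln (real (k*B)) - real (B+k-1) * ln (real (B+k-1)))) / real (B+k-1)"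
proof -
  define A where "A = real (B+k-1)"
  define b where "b = real (k*B)"
  define K where "K = real k"
  define c where "c = A * ln K + ((A + b) * ln (A + b) - b * ln b - A * ln A)"
  have A0: "A > 0" and b0: "b > 0" and K0: "K > 0" using k B unfolding A_def b_def K_def by auto
  have bK: "b = K * real B" unfolding b_def K_def by simp
  have ev: "eventually (\<lambda>m. LBraw B k m / real ((B+k-1)*(k*B*m+1)) =
      real B * K * c * (real m/(A*(b*real m+1))) - real B * K * ((ln (K*A*real m+1) + ln ((A+b)*real m+1))/(A*(b*real m+1))))
      sequentially"
    using eventually_ge_at_top[of 1]
  proof eventually_elim
    case (elim m)
    have den: "real ((B+k-1)*(k*B*m+1)) = A*(b*real m+1)" unfolding A_def b_def by (simp only: of_nat_mult of_nat_add of_nat_1)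
    have "LBraw B k m = real B * K * (real m * c - ln (K * A * real m + 1) - ln ((A + b) * real m + 1))"
      using LB_identity[OF k B elim] unfolding A_def b_def K_def c_def by simp
    then have "LBraw B k m = real B * K * c * real m - real B * K * (ln (K * A * real m + 1) + ln ((A + b) * real m + 1))"
      by (simp add: algebra_simps)
    then show ?case unfolding den by (simp add: diff_divide_distrib)
  qed
  have "(\<lambda>m. real B * K * c * (real m/(A*(b*real m+1))) - real B * K * ((ln (K*A*real m+1) + ln ((A+b)*real m+1))/(A*(b*real m+1))))
      \<longlonglongrightarrow> real B * K * c * (1/(A*b)) - real B * K * 0"
    by (intro tendsto_diff tendsto_mult_left asy1[OF A0 b0 K0] asy2[OF A0 b0])
  moreover have "real B * K * c * (1/(A*b)) - real B * K * 0 = c / A" using A0 K0 B unfolding bK by (simp add: field_simps)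
  ultimately have "(\<lambda>m. real B * K * c * (real m/(A*(b*real m+1))) - real B * K * ((ln (K*A*real m+1) + ln ((A+b)*real m+1))/(A*(b*real m+1))))
      \<longlonglongrightarrow> c / A" by simp
  then have "(\<lambda>m. LBraw B k m / real ((B+k-1)*(k*B*m+1))) \<longlonglongrightarrow> c / A"
    using tendsto_cong[OF ev] by simp
  then show ?thesis unfolding c_def A_def b_def K_def .
qed

lemma G_identity:
  assumes A0: "(A::real) > 0" and b0: "(b::real) > 0"
  shows "(A * ln K + ((A + b) * ln (A + b) - b * ln b - A * ln A)) / A
     = ln K + (1 + b/A) * ln (1 + b/A) - (b/A) * ln (b/A)"
proof -
  have e1: "1 + b/A = (A+b)/A" using A0 by (simp add: field_simps)
  have e2: "ln ((A+b)/A) = ln (A+b) - ln A" using A0 b0 by (simp add: ln_div)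
  have e3: "ln (b/A) = ln b - ln A" using A0 b0 by (simp add: ln_div)
  show ?thesis unfolding e1 e2 e3 using A0 by (simp add: field_simps)
qed

lemma G_lim:
  assumes k: "k \<ge> 1"
  shows "(\<lambda>B. ln (real k) + (1 + real (k*B) / real (B+k-1)) * ln (1 + real (k*B) / real (B+k-1))
      - (real (k*B) / real (B+k-1)) * ln (real (k*B) / real (B+k-1)))
     \<longlonglongrightarrow> ln (real k) + (1 + real k) * ln (1 + real k) - real k * ln (real k)"
proof -
  have K0: "real k > 0" using k by simp
  have r: "(\<lambda>B. real (k*B) / real (B+k-1)) \<longlonglongrightarrow> real k"
  proof -
    have "(\<lambda>B. real k * real B / (real B + real k - 1)) \<longlonglongrightarrow> real k" by (rule asy3[OF K0])
    moreover have "(\<lambda>B. real (k*B) / real (B+k-1)) = (\<lambda>B. real k * real B / (real B + real k - 1))"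
    proof (rule ext)
      fix B
      have "B + k - 1 = B + (k - 1)" using k by simp
      then have "real (B + k - 1) = real B + real k - 1" using k by (simp add: of_nat_diff)
      then show "real (k*B) / real (B+k-1) = real k * real B / (real B + real k - 1)" by simp
    qed
    ultimately show ?thesis by (simp only:)
  qed
  show ?thesis using K0
    by (intro tendsto_intros r) auto
qed

lemma lnLL:
  assumes k: "k \<ge> 1"
  shows "ln (LL k) = ln (real k) + (1 + real k) * ln (1 + real k) - real k * ln (real k)"
proof -
  have p: "real (k+1) ^ (k+1) > 0" "real k ^ (k-1) > 0" using k by auto
  have a0: "ln (LL k) = ln (real (k+1) ^ (k+1)) - ln (real k ^ (k-1))"
    using p unfolding LL_def by (simp add: ln_div)
  have a1: "ln (real (k+1) ^ (k+1)) = real (k+1) * ln (real (k+1))" by (rule ln_realpow)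
  have a2: "ln (real k ^ (k-1)) = real (k-1) * ln (real k)" by (rule ln_realpow)
  have a3: "real (k+1) = 1 + real k" "real (k-1) = real k - 1" using k by (auto simp: of_nat_diff)
  have "ln (LL k) = real (k+1) * ln (real (k+1)) - real (k-1) * ln (real k)" by (simp only: a0 a1 a2)
  also have "\<dots> = ln (real k) + (1 + real k) * ln (1 + real k) - real k * ln (real k)"
    unfolding a3 by (simp add: algebra_simps)
  finally show ?thesis .
qed


lemma exists_good:
  assumes k: "k \<ge> 1" and c: "c < ln (LL k)"
  shows "\<exists>N\<ge>1. c < ln (real (wcount N k)) / real N"
proof -
  define G where "G = (\<lambda>B. ln (real k) + (1 + real (k*B) / real (B+k-1)) * ln (1 + real (k*B) / real (B+k-1))
      - (real (k*B) / real (B+k-1)) * ln (real (k*B) / real (B+k-1)))"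
  have "G \<longlonglongrightarrow> ln (LL k)" using G_lim[OF k] lnLL[OF k] unfolding G_def by simp
  then have "eventually (\<lambda>B. c < G B) sequentially" using c by (rule order_tendstoD(1))
  moreover have "eventually (\<lambda>B. B \<ge> 1) sequentially" by (rule eventually_ge_at_top)
  ultimately have "eventually (\<lambda>B. c < G B \<and> B \<ge> 1) sequentially" by (rule eventually_conj)
  then obtain B where B: "c < G B" "B \<ge> 1" unfolding eventually_sequentially by blast
  define A where "A = real (B+k-1)"
  define b where "b = real (k*B)"
  have A0: "A > 0" and b0: "b > 0" using k B unfolding A_def b_def by auto
  have "(\<lambda>m. LBraw B k m / real ((B+k-1)*(k*B*m+1))) \<longlonglongrightarrow> G B"
    using F_lim[OF k B(2)] G_identity[OF A0 b0, of "real k"] unfolding G_def A_def b_def by simp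
  then have "eventually (\<lambda>m. c < LBraw B k m / real ((B+k-1)*(k*B*m+1))) sequentially"
    using B(1) by (rule order_tendstoD(1))
  moreover have "eventually (\<lambda>m. m \<ge> 1) sequentially" by (rule eventually_ge_at_top)
  ultimately have "eventually (\<lambda>m. c < LBraw B k m / real ((B+k-1)*(k*B*m+1)) \<and> m \<ge> 1) sequentially"
    by (rule eventually_conj)
  then obtain m where m: "c < LBraw B k m / real ((B+k-1)*(k*B*m+1))" "m \<ge> 1"
    unfolding eventually_sequentially by blast
  define N where "N = (B+k-1)*(k*B*m+1)"
  have N1: "N \<ge> 1" using k B m unfolding N_def by simp
  have ll: "LBraw B k m \<le> ln (real (wcount N k))" using log_lower'[OF k B(2) m(2)] unfolding N_def .
  have Np: "0 \<le> real N" by simp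
  have "LBraw B k m / real N \<le> ln (real (wcount N k)) / real N" using ll Np by (rule divide_right_mono)
  moreover have "c < LBraw B k m / real N" using m(1) unfolding N_def .
  ultimately show ?thesis using N1 by (intro exI[of _ N]) auto
qed

theorem theorem3p4:
  fixes k :: nat
  assumes "k \<ge> 1"
  shows "convergent (\<lambda>n. root n (real (wcount n k))) \<and>
         limsup (\<lambda>n. ereal (root n (real (wcount n k))))
           = ereal (real (k + 1) ^ (k + 1) / real k ^ (k - 1))"
proof -
  have k: "k \<ge> 1" by (rule assms)
  define S where "S = (\<lambda>n. root n (real (wcount n k)))"
  have LL0: "LL k > 0" using k unfolding LL_def by simp
  have w1: "real (wcount n k) \<ge> 1" for n using wcount_pos[OF k, of n] by simp
  have up: "S n \<le> LL k" if "n \<ge> 1" for n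
  proof -
    have "S n \<le> root n (LL k ^ n)" unfolding S_def using that upper_real[OF k, of n] by simp
    also have "\<dots> = LL k" using that LL0 by (simp add: real_root_power_cancel)
    finally show ?thesis .
  qed
  have lo: "eventually (\<lambda>n. c < S n) sequentially" if c: "c < LL k" for c
  proof (cases "c < 1")
    case True
    have "eventually (\<lambda>n. n \<ge> 1) sequentially" by (rule eventually_ge_at_top)
    then show ?thesis
    proof eventually_elim
      case (elim n)
      then have "1 \<le> S n" unfolding S_def using w1[of n] by simp
      then show ?case using True by simp
    qed
  next
    case False
    then have c0: "c > 0" by simp
    have "ln c < ln (LL k)" using c c0 LL0 by simp
    then obtain N where N: "N \<ge> 1" "ln c < ln (real (wcount N k)) / real N" using exists_good[OF k] by blast
    define \<beta> where "\<beta> = ln (real (wcount N k))"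
    define \<alpha> where "\<alpha> = \<beta> / real N"
    have b0: "\<beta> \<ge> 0" unfolding \<beta>_def using w1[of N] by simp
    have "(\<lambda>n. \<alpha> - \<beta> / real n) \<longlonglongrightarrow> \<alpha> - 0" by (intro tendsto_intros)
    then have "eventually (\<lambda>n. ln c < \<alpha> - \<beta> / real n) sequentially"
      using N(2) unfolding \<alpha>_def \<beta>_def by (intro order_tendstoD(1)) auto
    moreover have "eventually (\<lambda>n. n \<ge> N) sequentially" by (rule eventually_ge_at_top)
    ultimately show ?thesis
    proof eventually_elim
      case (elim n)
      have n1: "n \<ge> 1" using elim N by simp
      define q where "q = n div N"
      have qN: "N * q \<le> n" unfolding q_def by (simp add: mult.commute)
      have "wcount N k ^ q \<le> wcount n k" by (rule wcount_pow[OF k qN])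
      then have "real (wcount N k) ^ q \<le> real (wcount n k)" by (metis of_nat_le_iff of_nat_power)
      moreover have "real (wcount N k) ^ q > 0" using w1[of N] by simp
      ultimately have "ln (real (wcount N k) ^ q) \<le> ln (real (wcount n k))" by (intro ln_mono) auto
      moreover have "ln (real (wcount N k) ^ q) = real q * \<beta>" unfolding \<beta>_def using w1[of N] by (simp add: ln_realpow)
      ultimately have h1: "real q * \<beta> \<le> ln (real (wcount n k))" by simp
      have "n < N * (q + 1)" unfolding q_def using N(1)
        by (metis add.commute div_mult_mod_eq mod_less_divisor mult.commute mult_Suc_right
            nat_add_left_cancel_less not_one_le_zero plus_1_eq_Suc gr0I)
      then have "real n < real N * (real q + 1)" by (metis of_nat_1 of_nat_add of_nat_less_iff of_nat_mult)
      then have "real n / real N - 1 \<le> real q" using N(1) by (simp add: field_simps)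
      then have "(real n / real N - 1) * \<beta> \<le> real q * \<beta>" using b0 by (rule mult_right_mono)
      then have "real n * \<alpha> - \<beta> \<le> ln (real (wcount n k))" using h1 unfolding \<alpha>_def by (simp add: algebra_simps)
      then have "(real n * \<alpha> - \<beta>) / real n \<le> ln (real (wcount n k)) / real n"
        by (rule divide_right_mono) simp
      moreover have "(real n * \<alpha> - \<beta>) / real n = \<alpha> - \<beta> / real n" using n1 by (simp add: field_simps)
      ultimately have "\<alpha> - \<beta> / real n \<le> ln (real (wcount n k)) / real n" by simp
      then have "ln c < ln (S n)" unfolding S_def using elim n1 by (simp add: ln_root)
      moreover have "S n > 0" unfolding S_def using w1[of n] n1 by simp
      ultimately show ?case using c0 by simp
    qed
  qed
  have "S \<longlonglongrightarrow> LL k"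
  proof (rule order_tendstoI)
    fix c assume "c < LL k" then show "eventually (\<lambda>n. c < S n) sequentially" by (rule lo)
  next
    fix c assume c: "LL k < c"
    have "eventually (\<lambda>n. n \<ge> 1) sequentially" by (rule eventually_ge_at_top)
    then show "eventually (\<lambda>n. S n < c) sequentially"
      by eventually_elim (use up c in fastforce)
  qed
  then have conv: "convergent S" by (rule convergentI)
  have "(\<lambda>n. ereal (S n)) \<longlonglongrightarrow> ereal (LL k)" using \<open>S \<longlonglongrightarrow> LL k\<close> by (rule tendsto_ereal)
  then have "limsup (\<lambda>n. ereal (S n)) = ereal (LL k)" by (intro lim_imp_Limsup) auto
  then show ?thesis using conv unfolding S_def LL_def by simp
qed


end
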